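(* Let $1\le p\le\infty$. There is no sequence $(x_n)_{n\ge1}\subset[0,1]$ and finite constant $C_p$ such that, with $\mu_N:=\frac1N\sum_{n=1}^N\delta_{x_n}$, \[ W_p(\mu_N,\lambda_1)\le C_p\,N^{-1}\qquad\text{for all }N\in\mathbb{N}. \]
   Context: $\lambda_1$ is Lebesgue measure on $[0,1]$. For Borel probability measures $\mu,\nu$ on $[0,1]$, $\Pi(\mu,\nu)$ denotes the set of couplings; for $1\le p<\infty$, $W_p(\mu,\nu):=\bigl(\inf_{\pi\in\Pi(\mu,\nu)}\int|x-y|^p\,d\pi\bigr)^{1/p}$, and $W_\infty(\mu,\nu):=\inf_{\pi\in\Pi(\mu,\nu)}\operatorname{ess\,sup}_{(x,y)\sim\pi}|x-y|$. *)

theory Defs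
  imports "HOL-Probability.Probability"
begin

text \<open>Borel probability measures on [0,1] are represented as probability measures on
  the Borel sets of the real line (concentrated on [0,1]).\<close>

definition lambda1 :: "real measure" where
  "lambda1 = density lborel (indicator {0..1})"

definition empirical :: "(nat \<Rightarrow> real) \<Rightarrow> nat \<Rightarrow> real measure" where
  "empirical x N = distr (uniform_measure (count_space UNIV) {1..N}) borel x"

definition couplings :: "real measure \<Rightarrow> real measure \<Rightarrow> (real \<times> real) measure set" where
  "couplings \<mu> \<nu> = {\<pi>. sets \<pi> = sets (borel \<Otimes>\<^sub>M borel) \<and> prob_space \<pi> \<and>
      distr \<pi> borel fst = \<mu> \<and> distr \<pi> borel snd = \<nu>}"

definition Wp :: "real \<Rightarrow> real measure \<Rightarrow> real measure \<Rightarrow> real" where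
  "Wp p \<mu> \<nu> = (INF \<pi> \<in> couplings \<mu> \<nu>. (\<integral>z. \<bar>fst z - snd z\<bar> powr p \<partial>\<pi>)) powr (1 / p)"

definition Winf :: "real measure \<Rightarrow> real measure \<Rightarrow> ereal" where
  "Winf \<mu> \<nu> = (INF \<pi> \<in> couplings \<mu> \<nu>. esssup \<pi> (\<lambda>z. ereal \<bar>fst z - snd z\<bar>))"

end

theory Submission
  imports Defs
begin

lemma sets_lambda1[simp, measurable_cong]: "sets lambda1 = sets borel"
  by (simp add: lambda1_def)
lemma space_lambda1[simp]: "space lambda1 = UNIV"
  by (simp add: lambda1_def)

lemma prob_space_lambda1: "prob_space lambda1"
proof
  have "emeasure lambda1 UNIV = emeasure lborel {0..1::real}"
    unfolding lambda1_def by (simp add: emeasure_density nn_integral_indicator)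
  then show "emeasure lambda1 (space lambda1) = 1" by simp
qed

lemma integral_lambda1:
  fixes f :: "real \<Rightarrow> real"
  assumes [measurable]: "f \<in> borel_measurable borel"
  shows "integral\<^sup>L lambda1 f = integral\<^sup>L lborel (\<lambda>x. indicator {0..1} x * f x)"
proof -
  have eq: "lambda1 = density lborel (\<lambda>x. ennreal (indicator {0..1} x))"
    unfolding lambda1_def by (intro density_cong) (auto split: split_indicator)
  show ?thesis unfolding eq by (subst integral_density) auto
qed

lemma uniform_eq:
  assumes "N \<ge> 1"
  shows "uniform_measure (count_space UNIV) {1..N} =
     density (count_space UNIV) (\<lambda>j. ennreal (indicator {1..N} j / real N))"
  unfolding uniform_measure_def
  using assms
  by (intro density_cong) (auto simp: divide_ennreal ennreal_of_nat_eq_real_of_nat ennreal_1[symmetric] simp del: ennreal_1 split: split_indicator)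

lemma sets_empirical[simp, measurable_cong]: "sets (empirical x N) = sets borel"
  by (simp add: empirical_def)
lemma space_empirical[simp]: "space (empirical x N) = UNIV"
  by (simp add: empirical_def)

lemma integral_empirical:
  fixes f :: "real \<Rightarrow> real"
  assumes [measurable]: "f \<in> borel_measurable borel" and N: "N \<ge> 1"
  shows "integral\<^sup>L (empirical x N) f = (\<Sum>j=1..N. f (x j)) / real N"
proof -
  have "integral\<^sup>L (empirical x N) f = integral\<^sup>L (uniform_measure (count_space UNIV) {1..N}) (\<lambda>j. f (x j))"
    unfolding empirical_def by (subst integral_distr) auto
  also have "\<dots> = integral\<^sup>L (count_space UNIV) (\<lambda>j. (indicator {1..N} j / real N) *\<^sub>R f (x j))"
    unfolding uniform_eq[OF N] by (subst integral_density) auto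
  also have "\<dots> = (\<Sum>j\<in>{1..N}. (indicator {1..N} j / real N) *\<^sub>R f (x j))"
    by (subst lebesgue_integral_count_space_finite_support) (auto split: split_indicator intro!: sum.mono_neutral_left)
  also have "\<dots> = (\<Sum>j=1..N. f (x j)) / real N"
    by (simp add: sum_divide_distrib)
  finally show ?thesis .
qed

lemma prob_space_empirical:
  assumes N: "N \<ge> 1" shows "prob_space (empirical x N)"
  unfolding empirical_def
proof (rule prob_space.prob_space_distr)
  show "prob_space (uniform_measure (count_space UNIV) {1..N})"
    by (rule prob_space_uniform_measure) (use N in auto)
qed auto

lemma AE_empirical:
  assumes N: "N \<ge> 1" and x: "\<forall>n\<ge>1. x n \<in> {0..1}"
  shows "AE u in empirical x N. u \<in> {0..1}"
proof -
  have x': "\<And>n. Suc 0 \<le> n \<Longrightarrow> 0 \<le> x n \<and> x n \<le> 1" using x by auto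
  show ?thesis unfolding empirical_def
  by (subst AE_distr_iff) (auto intro!: AE_uniform_measureI simp: AE_count_space x')
qed 

lemma emeasure_pair_snd:
  assumes "prob_space M" "sigma_finite_measure N" "A \<in> sets N"
  shows "emeasure (M \<Otimes>\<^sub>M N) (space M \<times> A) = emeasure N A"
proof -
  interpret M: prob_space M by fact
  interpret N: sigma_finite_measure N by fact
  show ?thesis using N.emeasure_pair_measure_Times[OF sets.top[of M] assms(3)] by (simp add: M.emeasure_space_1)
qed

lemma distr_pair_snd':
  assumes "prob_space M" "prob_space N"
  shows "distr (M \<Otimes>\<^sub>M N) N snd = N"
proof (intro measure_eqI)
  fix A assume A: "A \<in> sets (distr (M \<Otimes>\<^sub>M N) N snd)"
  from A have "emeasure (distr (M \<Otimes>\<^sub>M N) N snd) A = emeasure (M \<Otimes>\<^sub>M N) (space M \<times> A)"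
    by (auto simp add: emeasure_distr space_pair_measure dest: sets.sets_into_space intro!: arg_cong2[where f=emeasure])
  also have "\<dots> = emeasure N A"
    using A assms by (intro emeasure_pair_snd) (auto simp: prob_space_imp_sigma_finite)
  finally show "emeasure (distr (M \<Otimes>\<^sub>M N) N snd) A = emeasure N A" .
qed simp

lemma couplings_nonempty:
  assumes N: "N \<ge> 1"
  shows "empirical x N \<Otimes>\<^sub>M lambda1 \<in> couplings (empirical x N) lambda1"
proof -
  have P1: "prob_space (empirical x N)" by (rule prob_space_empirical[OF N])
  have P2: "prob_space lambda1" by (rule prob_space_lambda1)
  have "distr (empirical x N \<Otimes>\<^sub>M lambda1) borel fst = distr (empirical x N \<Otimes>\<^sub>M lambda1) (empirical x N) fst"
    by (rule distr_cong) auto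
  also have "\<dots> = empirical x N" by (rule prob_space.distr_pair_fst[OF P2])
  finally have 1: "distr (empirical x N \<Otimes>\<^sub>M lambda1) borel fst = empirical x N" .
  have "distr (empirical x N \<Otimes>\<^sub>M lambda1) borel snd = distr (empirical x N \<Otimes>\<^sub>M lambda1) lambda1 snd"
    by (rule distr_cong) auto
  also have "\<dots> = lambda1" by (rule distr_pair_snd'[OF P1 P2])
  finally have 2: "distr (empirical x N \<Otimes>\<^sub>M lambda1) borel snd = lambda1" .
  show ?thesis unfolding couplings_def using 1 2 prob_space_pair[OF P1 P2]
    by (auto intro!: sets_pair_measure_cong)
qed

lemma coupling_facts:
  assumes pi: "\<pi> \<in> couplings (empirical x N) lambda1" and N: "N \<ge> 1"
    and x: "\<forall>n\<ge>1. x n \<in> {0..1}"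
  shows "prob_space \<pi>" and "sets \<pi> = sets (borel \<Otimes>\<^sub>M borel)"
    and "AE z in \<pi>. fst z \<in> {0..1} \<and> snd z \<in> {0..1}"
    and "integrable \<pi> (\<lambda>z. \<bar>fst z - snd z\<bar>)"
    and "AE z in \<pi>. \<bar>fst z - snd z\<bar> \<le> 1"
proof -
  note c = pi[unfolded couplings_def, simplified]
  show P: "prob_space \<pi>" using c by auto
  show S: "sets \<pi> = sets (borel \<Otimes>\<^sub>M borel)" using c by auto
  have mf[measurable]: "fst \<in> measurable \<pi> borel" unfolding measurable_cong_sets[OF S refl] by simp
  have ms[measurable]: "snd \<in> measurable \<pi> borel" unfolding measurable_cong_sets[OF S refl] by simp
  have d: "(\<lambda>z. \<bar>fst z - snd z\<bar>) \<in> borel_measurable \<pi>" by measurable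
  have eqf: "distr \<pi> borel fst = empirical x N" using c by simp
  have "AE u in distr \<pi> borel fst. u \<in> {0..1}"
    unfolding eqf by (rule AE_empirical[OF N x])
  then have 1: "AE z in \<pi>. fst z \<in> {0..1}"
    by (subst (asm) AE_distr_iff) auto
  have AEl: "AE u in lambda1. u \<in> {0..1}"
    unfolding lambda1_def by (subst AE_density) (auto split: split_indicator)
  have eqs: "distr \<pi> borel snd = lambda1" using c by simp
  have "AE u in distr \<pi> borel snd. u \<in> {0..1}"
    unfolding eqs by (rule AEl)
  then have 2: "AE z in \<pi>. snd z \<in> {0..1}"
    by (subst (asm) AE_distr_iff) auto
  show AE: "AE z in \<pi>. fst z \<in> {0..1} \<and> snd z \<in> {0..1}" using 1 2 by auto
  show B: "AE z in \<pi>. \<bar>fst z - snd z\<bar> \<le> 1" using AE by eventually_elim auto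
  interpret prob_space \<pi> by (rule P)
  show "integrable \<pi> (\<lambda>z. \<bar>fst z - snd z\<bar>)"
    by (rule Bochner_Integration.integrable_bound[where f="\<lambda>_. 1::real"]) (use B d in auto)
qed

lemma coupling_dual:
  assumes pi: "\<pi> \<in> couplings (empirical x N) lambda1" and N: "N \<ge> 1"
    and x: "\<forall>n\<ge>1. x n \<in> {0..1}"
    and H[measurable]: "H \<in> borel_measurable borel"
    and Lip: "\<And>u v. \<bar>H u - H v\<bar> \<le> L * \<bar>u - v\<bar>"
    and Bd: "\<And>u. \<bar>H u\<bar> \<le> B"
  shows "\<bar>(\<Sum>j=1..N. H (x j)) / real N - integral\<^sup>L lambda1 H\<bar> \<le> L * (\<integral>z. \<bar>fst z - snd z\<bar> \<partial>\<pi>)"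
proof -
  note F = coupling_facts[OF pi N x]
  note c = pi[unfolded couplings_def, simplified]
  interpret prob_space \<pi> by (rule F(1))
  have mf[measurable]: "fst \<in> measurable \<pi> borel" unfolding measurable_cong_sets[OF F(2) refl] by simp
  have ms[measurable]: "snd \<in> measurable \<pi> borel" unfolding measurable_cong_sets[OF F(2) refl] by simp
  have i1: "integrable \<pi> (\<lambda>z. H (fst z))"
    by (rule Bochner_Integration.integrable_bound[OF integrable_const[of B]]) (auto intro!: AE_I2 simp: abs_le_iff, (meson Bd abs_le_D1 abs_le_D2 order_trans abs_ge_self)+)
  have i2: "integrable \<pi> (\<lambda>z. H (snd z))"
    by (rule Bochner_Integration.integrable_bound[OF integrable_const[of B]]) (auto intro!: AE_I2 simp: abs_le_iff, (meson Bd abs_le_D1 abs_le_D2 order_trans abs_ge_self)+)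
  have e1: "(\<Sum>j=1..N. H (x j)) / real N = (\<integral>z. H (fst z) \<partial>\<pi>)"
  proof -
    have "(\<Sum>j=1..N. H (x j)) / real N = integral\<^sup>L (empirical x N) H"
      by (rule integral_empirical[symmetric, OF H N])
    also have "\<dots> = integral\<^sup>L (distr \<pi> borel fst) H" using c by simp
    also have "\<dots> = (\<integral>z. H (fst z) \<partial>\<pi>)" by (subst integral_distr) auto
    finally show ?thesis .
  qed
  have e2: "integral\<^sup>L lambda1 H = (\<integral>z. H (snd z) \<partial>\<pi>)"
  proof -
    have "integral\<^sup>L lambda1 H = integral\<^sup>L (distr \<pi> borel snd) H" using c by simp
    also have "\<dots> = (\<integral>z. H (snd z) \<partial>\<pi>)" by (subst integral_distr) auto
    finally show ?thesis .
  qed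
  have "\<bar>(\<Sum>j=1..N. H (x j)) / real N - integral\<^sup>L lambda1 H\<bar> = \<bar>\<integral>z. H (fst z) - H (snd z) \<partial>\<pi>\<bar>"
    unfolding e1 e2 using i1 i2 by simp
  also have "\<dots> \<le> (\<integral>z. \<bar>H (fst z) - H (snd z)\<bar> \<partial>\<pi>)"
    using integral_norm_bound[of \<pi> "\<lambda>z. H (fst z) - H (snd z)"] by simp
  also have "\<dots> \<le> (\<integral>z. L * \<bar>fst z - snd z\<bar> \<partial>\<pi>)"
    by (intro integral_mono) (use i1 i2 F(4) Lip in auto)
  also have "\<dots> = L * (\<integral>z. \<bar>fst z - snd z\<bar> \<partial>\<pi>)" by simp
  finally show ?thesis .
qed

lemma powr_tangent:
  fixes u a p :: real
  assumes u: "u \<ge> 0" and a: "a > 0" and p: "p \<ge> 1"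
  shows "a powr p + p * a powr (p - 1) * (u - a) \<le> u powr p"
proof (cases "u = 0")
  case True
  have "a powr (p - 1) * a = a powr p" using a by (simp add: powr_diff)
  then have "a powr p + p * a powr (p - 1) * (u - a) = (1 - p) * a powr p"
    using True by (simp add: algebra_simps)
  also have "\<dots> \<le> 0" using p by (simp add: mult_nonpos_nonneg)
  finally show ?thesis using True by simp
next
  case False
  with u have u': "u > 0" by simp
  have "u powr p - a powr p \<ge> (p * a powr (p - 1)) * (u - a)"
  proof (rule convex_on_imp_above_tangent[where A="{0<..}"])
    show "convex_on {0<..} (\<lambda>x. x powr p)" by (rule powr_convex[OF p])
    show "connected ({0<..} :: real set)" by simp
    show "a \<in> interior {0<..}" using a by (simp add: interior_open)
    show "u \<in> {0<..}" using u' by simp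
    show "((\<lambda>x. x powr p) has_real_derivative p * a powr (p - 1)) (at a within {0<..})"
      using has_real_derivative_powr[OF a] by (rule DERIV_subset) simp
  qed
  then show ?thesis by simp
qed

lemma integral_powr_ge:
  fixes g :: "'a \<Rightarrow> real"
  assumes P: "prob_space M" and ig: "integrable M g" and g0: "AE z in M. g z \<ge> 0"
    and igp: "integrable M (\<lambda>z. g z powr p)" and p: "p \<ge> 1"
  shows "(integral\<^sup>L M g) powr p \<le> integral\<^sup>L M (\<lambda>z. g z powr p)"
proof -
  interpret prob_space M by (rule P)
  define a where "a = integral\<^sup>L M g"
  have a0: "a \<ge> 0" unfolding a_def by (rule integral_nonneg_AE[OF g0])
  show ?thesis
  proof (cases "a = 0")
    case True
    then show ?thesis unfolding a_def[symmetric] by (simp add: integral_nonneg_AE)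
  next
    case False
    with a0 have a: "a > 0" by simp
    have "integral\<^sup>L M (\<lambda>z. a powr p + p * a powr (p - 1) * (g z - a)) \<le> integral\<^sup>L M (\<lambda>z. g z powr p)"
      by (rule integral_mono_AE) (use ig igp g0 powr_tangent[OF _ a p] in auto)
    moreover have "integral\<^sup>L M (\<lambda>z. a powr p + p * a powr (p - 1) * (g z - a)) = a powr p"
      using ig by (simp add: a_def prob_space)
    ultimately show ?thesis unfolding a_def by simp
  qed
qed

lemma Wp_small:
  assumes p: "p \<ge> 1" and N: "N \<ge> 1" and x: "\<forall>n\<ge>1. x n \<in> {0..1}"
    and W: "Wp p (empirical x N) lambda1 \<le> C * (1 / real N)" and d: "\<delta> > 0"
  shows "\<exists>\<pi>\<in>couplings (empirical x N) lambda1. (\<integral>z. \<bar>fst z - snd z\<bar> \<partial>\<pi>) \<le> C / real N + \<delta>"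
proof -
  let ?S = "couplings (empirical x N) lambda1"
  let ?f = "\<lambda>\<pi>. (\<integral>z. \<bar>fst z - snd z\<bar> powr p \<partial>\<pi>)"
  define I where "I = (INF \<pi> \<in> ?S. ?f \<pi>)"
  have ne: "?S \<noteq> {}" using couplings_nonempty[OF N] by blast
  have f0: "?f \<pi> \<ge> 0" for \<pi> by (rule Bochner_Integration.integral_nonneg) simp
  have bdd: "bdd_below (?f ` ?S)" by (rule bdd_belowI[where m=0]) (use f0 in auto)
  have I0: "I \<ge> 0" unfolding I_def using ne f0 by (intro cINF_greatest) auto
  define c where "c = C / real N"
  have Wp_eq: "Wp p (empirical x N) lambda1 = I powr (1 / p)" unfolding Wp_def I_def ..
  have "I powr (1/p) \<le> c" using W unfolding Wp_eq c_def by simp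
  then have c0: "c \<ge> 0" using I0 by (meson order_trans powr_ge_zero)
  have "I = (I powr (1/p)) powr p" using p I0 by (simp add: powr_powr)
  also have "\<dots> \<le> c powr p" using \<open>I powr (1/p) \<le> c\<close> p by (intro powr_mono2) auto
  also have "\<dots> < (c + \<delta>) powr p" using c0 d p by (intro powr_less_mono2) auto
  finally have "I < (c + \<delta>) powr p" .
  then obtain \<pi> where pi: "\<pi> \<in> ?S" and lt: "?f \<pi> < (c + \<delta>) powr p"
    unfolding I_def using cINF_less_iff[OF ne bdd] by blast
  note F = coupling_facts[OF pi N x]
  have mf[measurable]: "fst \<in> measurable \<pi> borel" unfolding measurable_cong_sets[OF F(2) refl] by simp
  have ms[measurable]: "snd \<in> measurable \<pi> borel" unfolding measurable_cong_sets[OF F(2) refl] by simp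
  interpret prob_space \<pi> by (rule F(1))
  have igp: "integrable \<pi> (\<lambda>z. \<bar>fst z - snd z\<bar> powr p)"
  proof (rule Bochner_Integration.integrable_bound[OF integrable_const[of 1]])
    show "AE z in \<pi>. norm (\<bar>fst z - snd z\<bar> powr p) \<le> norm (1::real)"
      using F(5) by eventually_elim (use p in \<open>auto intro!: powr_le1\<close>)
  qed measurable
  have "(\<integral>z. \<bar>fst z - snd z\<bar> \<partial>\<pi>) powr p \<le> ?f \<pi>"
    by (rule integral_powr_ge[OF F(1) F(4) _ igp p]) simp
  with lt have lt2: "(\<integral>z. \<bar>fst z - snd z\<bar> \<partial>\<pi>) powr p < (c + \<delta>) powr p" by simp
  have "(\<integral>z. \<bar>fst z - snd z\<bar> \<partial>\<pi>) \<le> c + \<delta>"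
  proof (rule ccontr)
    assume "\<not> ?thesis"
    then have "(c + \<delta>) powr p \<le> (\<integral>z. \<bar>fst z - snd z\<bar> \<partial>\<pi>) powr p"
      using c0 d p by (intro powr_mono2) auto
    with lt2 show False by simp
  qed
  then show ?thesis using pi unfolding c_def by blast
qed

lemma Winf_small:
  assumes N: "N \<ge> 1" and x: "\<forall>n\<ge>1. x n \<in> {0..1}"
    and W: "Winf (empirical x N) lambda1 \<le> ereal (C * (1 / real N))" and d: "\<delta> > 0"
  shows "\<exists>\<pi>\<in>couplings (empirical x N) lambda1. (\<integral>z. \<bar>fst z - snd z\<bar> \<partial>\<pi>) \<le> C / real N + \<delta>"
proof -
  let ?S = "couplings (empirical x N) lambda1"
  have "Winf (empirical x N) lambda1 < ereal (C / real N + \<delta>)"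
    using W d by (simp add: order_le_less_trans)
  then obtain \<pi> where pi: "\<pi> \<in> ?S" and lt: "esssup \<pi> (\<lambda>z. ereal \<bar>fst z - snd z\<bar>) < ereal (C / real N + \<delta>)"
    unfolding Winf_def by (auto simp: INF_less_iff)
  note F = coupling_facts[OF pi N x]
  interpret prob_space \<pi> by (rule F(1))
  have "AE z in \<pi>. ereal \<bar>fst z - snd z\<bar> \<le> esssup \<pi> (\<lambda>z. ereal \<bar>fst z - snd z\<bar>)"
    by (rule esssup_AE)
  then have ae: "AE z in \<pi>. \<bar>fst z - snd z\<bar> \<le> C / real N + \<delta>"
    by eventually_elim (use lt in \<open>auto dest: order.strict_trans1\<close>)
  have "(\<integral>z. \<bar>fst z - snd z\<bar> \<partial>\<pi>) \<le> (\<integral>z. C / real N + \<delta> \<partial>\<pi>)"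
    by (rule integral_mono_AE[OF F(4) _ ae]) simp
  then show ?thesis using pi by (auto simp: prob_space)
qed

lemma good_from_small:
  assumes N: "N \<ge> 1" and x: "\<forall>n\<ge>1. x n \<in> {0..1}"
    and small: "\<And>\<delta>. \<delta> > 0 \<Longrightarrow> \<exists>\<pi>\<in>couplings (empirical x N) lambda1. (\<integral>z. \<bar>fst z - snd z\<bar> \<partial>\<pi>) \<le> C / real N + \<delta>"
    and H[measurable]: "H \<in> borel_measurable borel"
    and Lip: "\<And>u v. \<bar>H u - H v\<bar> \<le> L * \<bar>u - v\<bar>" and L: "L \<ge> 0"
    and Bd: "\<And>u. \<bar>H u\<bar> \<le> B"
  shows "\<bar>(\<Sum>j=1..N. H (x j)) - real N * integral\<^sup>L lambda1 H\<bar> \<le> L * C"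
proof -
  have Npos: "real N > 0" using N by simp
  have "\<bar>(\<Sum>j=1..N. H (x j)) / real N - integral\<^sup>L lambda1 H\<bar> \<le> L * (C / real N)"
  proof (rule field_le_epsilon)
    fix e :: real assume e: "e > 0"
    define \<delta> where "\<delta> = e / (L + 1)"
    have d: "\<delta> > 0" using e L by (simp add: \<delta>_def)
    obtain \<pi> where pi: "\<pi> \<in> couplings (empirical x N) lambda1"
      and le: "(\<integral>z. \<bar>fst z - snd z\<bar> \<partial>\<pi>) \<le> C / real N + \<delta>" using small[OF d] by blast
    have "\<bar>(\<Sum>j=1..N. H (x j)) / real N - integral\<^sup>L lambda1 H\<bar> \<le> L * (\<integral>z. \<bar>fst z - snd z\<bar> \<partial>\<pi>)"
      by (rule coupling_dual[OF pi N x H Lip Bd])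
    also have "\<dots> \<le> L * (C / real N + \<delta>)" using le L by (intro mult_left_mono) auto
    also have "\<dots> = L * (C / real N) + L * \<delta>" by (simp add: algebra_simps)
    also have "L * \<delta> \<le> e" using e L unfolding \<delta>_def by (simp add: field_simps)
    finally show "\<bar>(\<Sum>j=1..N. H (x j)) / real N - integral\<^sup>L lambda1 H\<bar> \<le> L * (C / real N) + e"
      by simp
  qed
  then have "real N * \<bar>(\<Sum>j=1..N. H (x j)) / real N - integral\<^sup>L lambda1 H\<bar> \<le> real N * (L * (C / real N))"
    using Npos by (intro mult_left_mono) auto
  moreover have "real N * \<bar>(\<Sum>j=1..N. H (x j)) / real N - integral\<^sup>L lambda1 H\<bar>
      = \<bar>(\<Sum>j=1..N. H (x j)) - real N * integral\<^sup>L lambda1 H\<bar>"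
    using Npos by (simp add: abs_mult[symmetric] field_simps)
  ultimately show ?thesis using Npos by simp
qed

definition relu :: "real \<Rightarrow> real" where "relu v = max 0 v"

lemma hk_lambda1:
  fixes f :: "real \<Rightarrow> real"
  assumes "continuous_on UNIV f"
  shows "integral\<^sup>L lambda1 f = integral {0..1} f"
proof -
  have m: "f \<in> borel_measurable borel" using assms by (rule borel_measurable_continuous_onI)
  have "integral\<^sup>L lambda1 f = (LINT u:{0..1}|lborel. f u)"
    unfolding integral_lambda1[OF m] set_lebesgue_integral_def by simp
  also have "\<dots> = integral {0..1} f"
  proof (rule set_borel_integral_eq_integral(2))
    show "set_integrable lborel {0..1} f"
      unfolding set_integrable_def
      by (rule borel_integrable_compact) (auto intro: continuous_on_subset[OF assms])
  qed
  finally show ?thesis .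
qed

lemma integral_relu:
  assumes a0: "0 \<le> a" and a1: "a \<le> 1"
  shows "integral {0..1} (\<lambda>u. relu (u - a)) = (1 - a)^2 / 2"
proof -
  have cont: "continuous_on UNIV (\<lambda>u. relu (u - a))"
    unfolding relu_def by (intro continuous_intros)
  have "integral {0..1} (\<lambda>u. relu (u - a)) = integral {0..a} (\<lambda>u. relu (u - a)) + integral {a..1} (\<lambda>u. relu (u - a))"
    by (rule Henstock_Kurzweil_Integration.integral_combine[symmetric]) (use a0 a1 in \<open>auto intro!: integrable_continuous_real continuous_on_subset[OF cont]\<close>)
  also have "integral {0..a} (\<lambda>u. relu (u - a)) = integral {0..a} (\<lambda>u. 0::real)"
    by (rule integral_cong) (auto simp: relu_def)
  also have "integral {a..1} (\<lambda>u. relu (u - a)) = integral {a..1} (\<lambda>u. u - a)"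
    by (rule integral_cong) (auto simp: relu_def)
  also have "integral {a..1} (\<lambda>u. u - a) = (1 - a)^2 / 2"
  proof (rule integral_unique)
    have "((\<lambda>u. u - a) has_integral ((1 - a)^2 / 2 - (a - a)^2/2)) {a..1}"
    proof (rule fundamental_theorem_of_calculus)
      show "a \<le> 1" by fact
      fix u assume "u \<in> {a..1}"
      have "((\<lambda>u. (u - a)^2 / 2) has_real_derivative (u - a)) (at u within {a..1})"
        by (rule derivative_eq_intros refl | simp)+
      then show "((\<lambda>u. (u - a)^2 / 2) has_vector_derivative (u - a)) (at u within {a..1})"
        by (simp add: has_real_derivative_iff_has_vector_derivative)
    qed
    then show "((\<lambda>u. u - a) has_integral (1 - a)^2 / 2) {a..1}" by simp
  qed
  finally show ?thesis by simp
qed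

definition lin :: "real \<Rightarrow> nat \<Rightarrow> real \<Rightarrow> real" where
  "lin h c u = max 0 (min h (u - real c * h))"

lemma lin_relu: "h \<ge> 0 \<Longrightarrow> lin h c u = relu (u - real c * h) - relu (u - (real c + 1) * h)"
  unfolding lin_def relu_def by (auto simp: algebra_simps)

lemma continuous_lin: "continuous_on UNIV (lin h c)"
  unfolding lin_def by (intro continuous_intros)

lemma integral_lin:
  assumes h: "h > 0" and c: "(real c + 1) * h \<le> 1"
  shows "integral\<^sup>L lambda1 (\<lambda>u. h - lin h c u) = h * (real c * h + h / 2)"
proof -
  have c0: "0 \<le> real c * h" using h by simp
  have c1: "real c * h \<le> 1" using c h by (smt (verit) mult_right_mono)
  have c2: "0 \<le> (real c + 1) * h" using h by simp
  have cr: "continuous_on UNIV (\<lambda>u. relu (u - a))" for a unfolding relu_def by (intro continuous_intros)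
  have ir: "(\<lambda>u. relu (u - a)) integrable_on {0..1}" for a
    by (rule integrable_continuous_real) (rule continuous_on_subset[OF cr], simp)
  have "integral\<^sup>L lambda1 (\<lambda>u. h - lin h c u) = integral {0..1} (\<lambda>u. h - lin h c u)"
    by (rule hk_lambda1) (intro continuous_intros continuous_lin)
  also have "\<dots> = integral {0..1} (\<lambda>u. h - (relu (u - real c * h) - relu (u - (real c + 1) * h)))"
    using h by (intro integral_cong) (simp add: lin_relu)
  also have "\<dots> = h - ((1 - real c * h)^2/2 - (1 - (real c + 1) * h)^2/2)"
  proof -
    have i1: "(\<lambda>u. relu (u - real c * h) - relu (u - (real c + 1) * h)) integrable_on {0..1}"
      by (rule integrable_diff[OF ir ir])
    have "integral {0..1} (\<lambda>u. h - (relu (u - real c * h) - relu (u - (real c + 1) * h)))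
        = integral {0..1} (\<lambda>u::real. h) - integral {0..1} (\<lambda>u. relu (u - real c * h) - relu (u - (real c + 1) * h))"
      by (rule Henstock_Kurzweil_Integration.integral_diff) (use i1 in auto)
    also have "integral {0..1} (\<lambda>u. relu (u - real c * h) - relu (u - (real c + 1) * h))
        = integral {0..1} (\<lambda>u. relu (u - real c * h)) - integral {0..1} (\<lambda>u. relu (u - (real c + 1) * h))"
      by (rule Henstock_Kurzweil_Integration.integral_diff[OF ir ir])
    finally show ?thesis using c0 c1 c2 c by (simp add: integral_relu)
  qed
  also have "\<dots> = h * (real c * h + h / 2)" by (simp add: power2_eq_square field_simps)
  finally show ?thesis .
qed


lemma lin_bounds: "h \<ge> 0 \<Longrightarrow> 0 \<le> lin h c u \<and> lin h c u \<le> h"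
  unfolding lin_def by auto

lemma lin_mono: "u \<le> v \<Longrightarrow> lin h c u \<le> lin h c v"
  unfolding lin_def by (auto simp: max_def min_def)

lemma minmax_aux: "(a::real) \<ge> 0 \<Longrightarrow> h \<ge> 0 \<Longrightarrow> min a (max 0 u) + max 0 (min h (u - a)) = min (a + h) (max 0 u)"
  by (auto simp: min_def max_def)

lemma sum_lin: "h \<ge> 0 \<Longrightarrow> (\<Sum>c<K. lin h c u) = min (real K * h) (max 0 u)"
proof (induction K)
  case 0 then show ?case by simp
next
  case (Suc K)
  have k: "0 \<le> real K * h" using Suc.prems by simp
  have "(\<Sum>c<Suc K. lin h c u) = min (real K * h) (max 0 u) + max 0 (min h (u - real K * h))"
    using Suc by (simp add: lin_def)
  also have "\<dots> = min (real (Suc K) * h) (max 0 u)"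
    using minmax_aux[OF k Suc.prems] by (simp add: distrib_right)
  finally show ?case .
qed
lemma sum_lin_diff:
  assumes h: "h \<ge> 0"
  shows "(\<Sum>c<K. \<bar>lin h c u - lin h c v\<bar>) \<le> \<bar>u - v\<bar>"
proof -
  have *: "(\<Sum>c<K. \<bar>lin h c u - lin h c v\<bar>) \<le> v - u" if uv: "u \<le> v" for u v
  proof -
    have "(\<Sum>c<K. \<bar>lin h c u - lin h c v\<bar>) = (\<Sum>c<K. lin h c v - lin h c u)"
      using lin_mono[OF uv] by (intro sum.cong) auto
    also have "\<dots> = min (real K * h) (max 0 v) - min (real K * h) (max 0 u)"
      by (simp add: sum_subtractf sum_lin[OF h])
    also have "\<dots> \<le> v - u" using uv by (simp add: min_def max_def)
    finally show ?thesis .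
  qed
  show ?thesis
  proof (cases "u \<le> v")
    case True then show ?thesis using *[OF True] by simp
  next
    case False
    then have "(\<Sum>c<K. \<bar>lin h c v - lin h c u\<bar>) \<le> u - v" using *[of v u] by simp
    then show ?thesis using False by (simp add: abs_minus_commute)
  qed
qed

definition PP :: "real \<Rightarrow> (nat \<Rightarrow> real) \<Rightarrow> nat \<Rightarrow> nat \<Rightarrow> real" where
  "PP h x N c = (\<Sum>j=1..N. h - lin h c (x j)) - real N * (h * (real c * h + h / 2))"

lemma fin_eq: "(\<Sum>j=1..N. (\<Sum>c<K. g c * (h - lin h c (x j)))) - real N * (\<Sum>c<K. g c * (h * (real c * h + h / 2)))
   = (\<Sum>c<K. g c * PP h x N c)"
proof -
  have "(\<Sum>j=1..N. (\<Sum>c<K. g c * (h - lin h c (x j)))) = (\<Sum>c<K. g c * (\<Sum>j=1..N. (h - lin h c (x j))))"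
    by (subst sum.swap) (simp add: sum_distrib_left)
  moreover have "real N * (\<Sum>c<K. g c * (h * (real c * h + h / 2))) = (\<Sum>c<K. g c * (real N * (h * (real c * h + h / 2))))"
    by (simp add: sum_distrib_left algebra_simps)
  ultimately show ?thesis unfolding PP_def by (simp add: sum_subtractf[symmetric] right_diff_distrib)
qed

lemma step_good:
  assumes N: "N \<ge> 1" and x: "\<forall>n\<ge>1. x n \<in> {0..1}"
    and small: "\<And>\<delta>. \<delta> > 0 \<Longrightarrow> \<exists>\<pi>\<in>couplings (empirical x N) lambda1. (\<integral>z. \<bar>fst z - snd z\<bar> \<partial>\<pi>) \<le> C / real N + \<delta>"
    and h: "h > 0" and K: "real K * h = 1"
    and g: "\<And>c. c < K \<Longrightarrow> \<bar>g c\<bar> \<le> 2"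
  shows "\<bar>\<Sum>c<K. g c * PP h x N c\<bar> \<le> 2 * C"
proof -
  define H where "H u = (\<Sum>c<K. g c * (h - lin h c u))" for u
  have contH: "continuous_on UNIV H" unfolding H_def
    by (intro continuous_intros continuous_lin)
  have Hm: "H \<in> borel_measurable borel" by (rule borel_measurable_continuous_onI[OF contH])
  have lb: "\<bar>h - lin h c u\<bar> \<le> h" for c u using lin_bounds[of h c u] h by auto
  have Bd: "\<bar>H u\<bar> \<le> (\<Sum>c<K. 2 * h)" for u
  proof -
    have "\<bar>H u\<bar> \<le> (\<Sum>c<K. \<bar>g c * (h - lin h c u)\<bar>)" unfolding H_def by (rule sum_abs)
    also have "\<dots> \<le> (\<Sum>c<K. 2 * h)"
      by (intro sum_mono) (use g lb h in \<open>auto simp: abs_mult intro!: mult_mono\<close>)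
    finally show ?thesis .
  qed
  have Lip: "\<bar>H u - H v\<bar> \<le> 2 * \<bar>u - v\<bar>" for u v
  proof -
    have "H u - H v = (\<Sum>c<K. g c * (lin h c v - lin h c u))"
      unfolding H_def by (simp add: sum_subtractf[symmetric] algebra_simps)
    then have "\<bar>H u - H v\<bar> \<le> (\<Sum>c<K. \<bar>g c * (lin h c v - lin h c u)\<bar>)" by (simp add: sum_abs)
    also have "\<dots> \<le> (\<Sum>c<K. 2 * \<bar>lin h c u - lin h c v\<bar>)"
      by (intro sum_mono) (use g in \<open>auto simp: abs_mult abs_minus_commute intro!: mult_right_mono\<close>)
    also have "\<dots> = 2 * (\<Sum>c<K. \<bar>lin h c u - lin h c v\<bar>)" by (simp add: sum_distrib_left)
    also have "\<dots> \<le> 2 * \<bar>u - v\<bar>" using sum_lin_diff[OF less_imp_le[OF h], where K=K and u=u and v=v] by simp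
    finally show ?thesis .
  qed
  have main: "\<bar>(\<Sum>j=1..N. H (x j)) - real N * integral\<^sup>L lambda1 H\<bar> \<le> 2 * C"
    by (rule good_from_small[OF N x small Hm Lip _ Bd]) auto
  interpret prob_space lambda1 by (rule prob_space_lambda1)
  have il: "integrable lambda1 (\<lambda>u. h - lin h c u)" for c
  proof (rule Bochner_Integration.integrable_bound[OF integrable_const[of h]])
    show "(\<lambda>u. h - lin h c u) \<in> borel_measurable lambda1"
      using borel_measurable_continuous_onI[OF continuous_lin[of h c]] by simp
    show "AE u in lambda1. norm (h - lin h c u) \<le> norm h" using lb h by auto
  qed
  have cK: "c < K \<Longrightarrow> (real c + 1) * h \<le> 1" for c
    using K h by (metis mult_right_mono of_nat_less_imp_less less_imp_le of_nat_Suc Suc_leI of_nat_le_iff add.commute order_less_imp_le)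
  have intH: "integral\<^sup>L lambda1 H = (\<Sum>c<K. g c * (h * (real c * h + h / 2)))"
  proof -
    have "integral\<^sup>L lambda1 H = (\<Sum>c<K. integral\<^sup>L lambda1 (\<lambda>u. g c * (h - lin h c u)))"
      unfolding H_def by (rule Bochner_Integration.integral_sum) (use il in auto)
    also have "\<dots> = (\<Sum>c<K. g c * (h * (real c * h + h / 2)))"
      by (intro sum.cong refl) (simp add: integral_lin[OF h cK])
    finally show ?thesis .
  qed
  have "(\<Sum>j=1..N. H (x j)) - real N * integral\<^sup>L lambda1 H = (\<Sum>c<K. g c * PP h x N c)"
    unfolding intH H_def by (rule fin_eq)
  then show ?thesis using main by simp
qed

definition par :: "nat \<Rightarrow> real" where "par i = (if even i then 1 else -1)"

lemma par_add_double[simp]: "par (2 * b + i) = par i"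
  unfolding par_def by auto

lemma par_double[simp]: "par (2 * b) = 1"
  unfolding par_def by auto

lemma abs_par[simp]: "\<bar>par i\<bar> = 1"
  unfolding par_def by auto

lemma sum_blocks: fixes A R :: nat shows "(\<Sum>i<A*R. f i) = (\<Sum>a<A. \<Sum>r<R. f (a*R + r))"
proof (induction A)
  case 0 then show ?case by simp
next
  case (Suc A)
  have "(\<Sum>i<Suc A * R. f i) = (\<Sum>i<A*R + R. f i)" by (simp add: add.commute)
  also have "\<dots> = (\<Sum>i<A*R. f i) + (\<Sum>i\<in>{A*R..<A*R + R}. f i)"
    by (simp add: sum.atLeastLessThan_concat[symmetric] lessThan_atLeast0 sum.atLeastLessThan_concat)
  also have "(\<Sum>i\<in>{A*R..<A*R + R}. f i) = (\<Sum>r<R. f (A*R + r))"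
  proof -
    have "(\<Sum>i\<in>{A*R..<A*R + R}. f i) = (\<Sum>i\<in>{0 + A*R..<R + A*R}. f i)" by (simp add: add.commute)
    also have "\<dots> = (\<Sum>i\<in>{0..<R}. f (i + A*R))" by (rule sum.shift_bounds_nat_ivl)
    also have "\<dots> = (\<Sum>r<R. f (A*R + r))" by (simp add: lessThan_atLeast0 add.commute)
    finally show ?thesis .
  qed
  finally show ?case using Suc by simp
qed

lemma sum_half_split: fixes q :: nat shows "(\<Sum>r<2*q. f r) = (\<Sum>r<q. f r) + (\<Sum>r<q. f (q + r))"
proof -
  have "(\<Sum>r<2*q. f r) = (\<Sum>r<1*q + q. f r)" by (simp add: mult_2)
  also have "\<dots> = (\<Sum>a<2. \<Sum>r<q. f (a*q + r))" using sum_blocks[of f 2 q] by (simp add: mult_2)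
  also have "\<dots> = (\<Sum>r<q. f r) + (\<Sum>r<q. f (q + r))" by (simp add: numeral_2_eq_2)
  finally show ?thesis .
qed

lemma par_sum0:
  fixes q :: nat assumes "q > 0" shows "(\<Sum>r<2*q. par (r div q)) = 0"
proof -
  have "(\<Sum>r<2*q. par (r div q)) = (\<Sum>r<q. par (r div q)) + (\<Sum>r<q. par ((q + r) div q))"
    by (rule sum_half_split)
  also have "\<dots> = (\<Sum>r<q. 1) + (\<Sum>r<q. -1)"
    using assms by (intro arg_cong2[where f="(+)"] sum.cong) (auto simp: par_def)
  finally show ?thesis by simp
qed

lemma par_sum1:
  fixes q :: nat assumes "q > 0" shows "(\<Sum>r<2*q. par (r div q) * real r) = - (real q * real q)"
proof -
  have "(\<Sum>r<2*q. par (r div q) * real r) = (\<Sum>r<q. par (r div q) * real r) + (\<Sum>r<q. par ((q + r) div q) * real (q + r))"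
    by (rule sum_half_split)
  also have "\<dots> = (\<Sum>r<q. real r) + (\<Sum>r<q. - (real q + real r))"
    using assms by (intro arg_cong2[where f="(+)"] sum.cong) (auto simp: par_def)
  also have "\<dots> = - (real q * real q)" by (simp add: sum_subtractf)
  finally show ?thesis .
qed


lemma inner_rect:
  fixes q bt a b :: nat and hh :: real and x :: "nat \<Rightarrow> real"
  assumes q: "q > 0" and bt: "bt > 0" and hh: "hh > 0"
    and emp: "\<And>j. b*(2*bt) < j \<Longrightarrow> j \<le> b*(2*bt) + 2*bt \<Longrightarrow>
        x j \<le> real (a*(2*q)) * hh \<or> x j \<ge> real ((a+1)*(2*q)) * hh"
  shows "(\<Sum>s<2*bt. \<Sum>r<2*q. par (r div q) * par (s div bt) * PP hh x (b*(2*bt) + s + 1) (a*(2*q) + r))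
          = - ((hh * real q * real bt) * (hh * real q * real bt))"
proof -
  define lam where "lam j = (\<Sum>r<2*q. par (r div q) * lin hh (a*(2*q)+r) (x j))" for j
  have S1: "(\<Sum>r<2*q. par (r div q) * PP hh x N (a*(2*q)+r))
            = - (\<Sum>j=1..N. lam j) + real N * (hh * hh * (real q * real q))" for N
  proof -
    have A: "(\<Sum>r<2*q. par (r div q) * (\<Sum>j=1..N. hh - lin hh (a*(2*q)+r) (x j))) = - (\<Sum>j=1..N. lam j)"
    proof -
      have "(\<Sum>r<2*q. par (r div q) * (\<Sum>j=1..N. hh - lin hh (a*(2*q)+r) (x j)))
          = (\<Sum>j=1..N. \<Sum>r<2*q. par (r div q) * hh - par (r div q) * lin hh (a*(2*q)+r) (x j))"
        by (subst sum.swap) (simp add: sum_distrib_left right_diff_distrib)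
      also have "\<dots> = (\<Sum>j=1..N. hh * (\<Sum>r<2*q. par (r div q)) - lam j)"
        by (simp add: sum_subtractf lam_def sum_distrib_left mult.commute)
      also have "\<dots> = - (\<Sum>j=1..N. lam j)" using par_sum0[OF q] by (simp add: sum_negf)
      finally show ?thesis .
    qed
    have B: "(\<Sum>r<2*q. par (r div q) * (real N * (hh * (real (a*(2*q)+r) * hh + hh / 2))))
          = real N * hh * hh * ((real (a*(2*q))) * (\<Sum>r<2*q. par (r div q)) + (\<Sum>r<2*q. par (r div q) * real r))
            + real N * hh * (hh / 2) * (\<Sum>r<2*q. par (r div q))"
      by (simp add: sum_distrib_left sum.distrib algebra_simps)
    also have "\<dots> = - real N * (hh * hh * (real q * real q))"
      using par_sum0[OF q] par_sum1[OF q] by simp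
    finally have B': "(\<Sum>r<2*q. par (r div q) * (real N * (hh * (real (a*(2*q)+r) * hh + hh / 2))))
       = - real N * (hh * hh * (real q * real q))" .
    have "(\<Sum>r<2*q. par (r div q) * PP hh x N (a*(2*q)+r))
        = (\<Sum>r<2*q. par (r div q) * (\<Sum>j=1..N. hh - lin hh (a*(2*q)+r) (x j)))
          - (\<Sum>r<2*q. par (r div q) * (real N * (hh * (real (a*(2*q)+r) * hh + hh / 2))))"
      unfolding PP_def by (simp add: sum_subtractf right_diff_distrib)
    also have "\<dots> = - (\<Sum>j=1..N. lam j) + real N * (hh * hh * (real q * real q))"
      unfolding A B' by simp
    finally show ?thesis .
  qed
  have S2: "lam j = 0" if j1: "b*(2*bt) < j" and j2: "j \<le> b*(2*bt) + 2*bt" for j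
  proof -
    from emp[OF j1 j2] show ?thesis
    proof
      assume le: "x j \<le> real (a*(2*q)) * hh"
      have "lin hh (a*(2*q)+r) (x j) = 0" for r
      proof -
        have "0 \<le> hh * real r" using hh by simp
        moreover have "real (a*(2*q)+r) * hh = real (a*(2*q)) * hh + hh * real r" by (simp add: algebra_simps)
        ultimately have "x j - real (a*(2*q)+r) * hh \<le> 0" using le by linarith
        then show ?thesis unfolding lin_def using hh by simp
      qed
      then show ?thesis unfolding lam_def by simp
    next
      assume ge: "x j \<ge> real ((a+1)*(2*q)) * hh"
      have "lin hh (a*(2*q)+r) (x j) = hh" if r: "r < 2*q" for r
      proof -
        have "real (a*(2*q)+r) + 1 \<le> real ((a+1)*(2*q))" using r by simp
        then have "(real (a*(2*q)+r) + 1) * hh \<le> real ((a+1)*(2*q)) * hh" using hh by (intro mult_right_mono) auto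
        then have "hh \<le> x j - real (a*(2*q)+r) * hh" using ge by (simp add: algebra_simps)
        then show ?thesis unfolding lin_def using hh by simp
      qed
      then have "lam j = (\<Sum>r<2*q. par (r div q) * hh)" unfolding lam_def by (intro sum.cong) auto
      also have "\<dots> = 0" using par_sum0[OF q] by (simp add: sum_distrib_right[symmetric])
      finally show ?thesis .
    qed
  qed
  have S3: "(\<Sum>j=1..b*(2*bt)+s+1. lam j) = (\<Sum>j=1..b*(2*bt). lam j)" if s: "s < 2*bt" for s
  proof -
    have "(\<Sum>j=1..b*(2*bt)+(s+1). lam j) = (\<Sum>j=1..b*(2*bt). lam j) + (\<Sum>j=b*(2*bt)+1..b*(2*bt)+(s+1). lam j)"
      by (rule sum.ub_add_nat) simp
    also have "(\<Sum>j=b*(2*bt)+1..b*(2*bt)+(s+1). lam j) = 0"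
      using s by (intro sum.neutral) (auto intro!: S2)
    finally show ?thesis by (simp add: add.assoc)
  qed
  define L0 where "L0 = (\<Sum>j=1..b*(2*bt). lam j)"
  have "(\<Sum>s<2*bt. \<Sum>r<2*q. par (r div q) * par (s div bt) * PP hh x (b*(2*bt) + s + 1) (a*(2*q) + r))
      = (\<Sum>s<2*bt. par (s div bt) * (\<Sum>r<2*q. par (r div q) * PP hh x (b*(2*bt) + s + 1) (a*(2*q) + r)))"
    by (simp add: sum_distrib_left mult_ac)
  also have "\<dots> = (\<Sum>s<2*bt. par (s div bt) * (- L0 + real (b*(2*bt) + s + 1) * (hh * hh * (real q * real q))))"
  proof (intro sum.cong refl)
    fix s assume "s \<in> {..<2*bt}"
    then have s: "s < 2*bt" by simp
    show "par (s div bt) * (\<Sum>r<2*q. par (r div q) * PP hh x (b*(2*bt) + s + 1) (a*(2*q) + r))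
        = par (s div bt) * (- L0 + real (b*(2*bt) + s + 1) * (hh * hh * (real q * real q)))"
      unfolding S1 S3[OF s] L0_def ..
  qed
  also have "\<dots> = (\<Sum>s<2*bt. (- L0 + real (b*(2*bt) + 1) * (hh * hh * (real q * real q))) * par (s div bt)
        + (hh * hh * (real q * real q)) * (par (s div bt) * real s))"
    by (intro sum.cong refl) (simp add: algebra_simps)
  also have "\<dots> = (- L0 + real (b*(2*bt) + 1) * (hh * hh * (real q * real q))) * (\<Sum>s<2*bt. par (s div bt))
        + (hh * hh * (real q * real q)) * (\<Sum>s<2*bt. par (s div bt) * real s)"
    by (simp add: sum.distrib sum_distrib_left)
  also have "\<dots> = - ((hh * real q * real bt) * (hh * real q * real bt))"
    using par_sum0[OF bt] par_sum1[OF bt] by simp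
  finally show ?thesis .
qed


lemma div_block1: "r < 2*q \<Longrightarrow> (a*(2*q) + r) div (2*q) = (a::nat)"
  by simp

lemma div_block2: "q > 0 \<Longrightarrow> (a*(2*q) + r) div q = 2*a + r div (q::nat)"
proof -
  assume q: "q > 0"
  have e: "a*(2*q) + r = r + (2*a) * q" by (simp add: algebra_simps)
  show ?thesis unfolding e using div_mult_self1[of q r "2*a"] q by (simp only: add.commute)
qed

lemma rect:
  fixes q bt A Bn :: nat and hh :: real and x :: "nat \<Rightarrow> real" and \<kappa> :: "nat \<Rightarrow> nat \<Rightarrow> real"
  assumes q: "q > 0" and bt: "bt > 0" and hh: "hh > 0"
    and emp: "\<And>a b j. a < A \<Longrightarrow> b < Bn \<Longrightarrow> \<kappa> a b \<noteq> 0 \<Longrightarrow> b*(2*bt) < j \<Longrightarrow> j \<le> b*(2*bt) + 2*bt \<Longrightarrow>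
        x j \<le> real (a*(2*q)) * hh \<or> x j \<ge> real ((a+1)*(2*q)) * hh"
  shows "(\<Sum>t<Bn*(2*bt). \<Sum>c<A*(2*q). \<kappa> (c div (2*q)) (t div (2*bt)) * par (c div q) * par (t div bt) * PP hh x (t+1) c)
      = - ((hh * real q * real bt) * (hh * real q * real bt)) * (\<Sum>a<A. \<Sum>b<Bn. \<kappa> a b)"
proof -
  define D where "D = - ((hh * real q * real bt) * (hh * real q * real bt))"
  define F where "F a b = (\<Sum>s<2*bt. \<Sum>r<2*q. par (r div q) * par (s div bt) * PP hh x (b*(2*bt) + s + 1) (a*(2*q) + r))" for a b
  have "(\<Sum>t<Bn*(2*bt). \<Sum>c<A*(2*q). \<kappa> (c div (2*q)) (t div (2*bt)) * par (c div q) * par (t div bt) * PP hh x (t+1) c)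
      = (\<Sum>b<Bn. \<Sum>s<2*bt. \<Sum>a<A. \<Sum>r<2*q. \<kappa> ((a*(2*q) + r) div (2*q)) ((b*(2*bt) + s) div (2*bt))
           * par ((a*(2*q) + r) div q) * par ((b*(2*bt) + s) div bt) * PP hh x (b*(2*bt) + s + 1) (a*(2*q) + r))"
    by (simp only: sum_blocks)
  also have "\<dots> = (\<Sum>b<Bn. \<Sum>s<2*bt. \<Sum>a<A. \<Sum>r<2*q. \<kappa> a b
           * (par (r div q) * par (s div bt) * PP hh x (b*(2*bt) + s + 1) (a*(2*q) + r)))"
    using q bt by (intro sum.cong refl) (simp add: div_block1 div_block2 del: div_mult_self1 div_mult_self2 div_mult_self3 div_mult_self4)
  also have "\<dots> = (\<Sum>b<Bn. \<Sum>a<A. \<kappa> a b * F a b)"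
  proof (rule sum.cong[OF refl])
    fix b
    show "(\<Sum>s<2*bt. \<Sum>a<A. \<Sum>r<2*q. \<kappa> a b
           * (par (r div q) * par (s div bt) * PP hh x (b*(2*bt) + s + 1) (a*(2*q) + r))) = (\<Sum>a<A. \<kappa> a b * F a b)"
      unfolding F_def by (subst sum.swap) (simp add: sum_distrib_left)
  qed
  also have "\<dots> = (\<Sum>b<Bn. \<Sum>a<A. \<kappa> a b * D)"
  proof (intro sum.cong refl)
    fix a b assume a: "a \<in> {..<A}" and b: "b \<in> {..<Bn}"
    show "\<kappa> a b * F a b = \<kappa> a b * D"
    proof (cases "\<kappa> a b = 0")
      case False
      have "F a b = D" unfolding F_def D_def
        by (rule inner_rect[OF q bt hh]) (rule emp, use a b False in auto)
      then show ?thesis by simp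
    qed simp
  qed
  also have "\<dots> = D * (\<Sum>a<A. \<Sum>b<Bn. \<kappa> a b)"
    by (subst sum.swap) (simp add: sum_distrib_left sum_distrib_right mult.commute)
  finally show ?thesis unfolding D_def .
qed

lemma div_round: "p > 0 \<Longrightarrow> (c div p * p) div (p * e) = c div (p * (e::nat))"
  by (simp add: div_mult2_eq)

lemma pow2_split: "a = b + d \<Longrightarrow> (2::nat)^a = 2^b * 2^d"
  by (simp add: power_add)

definition Emp :: "nat \<Rightarrow> real \<Rightarrow> (nat \<Rightarrow> real) \<Rightarrow> nat \<Rightarrow> nat \<Rightarrow> nat \<Rightarrow> bool" where
  "Emp n hh x k a b \<longleftrightarrow> (\<forall>j. b * 2^(k-1) < j \<and> j \<le> b * 2^(k-1) + 2^(k-1) \<longrightarrow>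
      x j \<le> real (a * 2^(n+1-k)) * hh \<or> x j \<ge> real ((a+1) * 2^(n+1-k)) * hh)"

definition ff :: "nat \<Rightarrow> real \<Rightarrow> (nat \<Rightarrow> real) \<Rightarrow> nat \<Rightarrow> nat \<Rightarrow> nat \<Rightarrow> real" where
  "ff n hh x k t c = (if Emp n hh x k (c div 2^(n+1-k)) (t div 2^(k-1))
      then par (c div 2^(n-k)) * par (t div 2^(k-2)) else 0)"

lemma fac:
  assumes k2: "2 \<le> k" and kk: "k \<le> k'" and kK: "k' \<le> K" and Kn: "K \<le> n"
  shows "ff n hh x k' t c = ff n hh x k' (t div 2^(k-1) * 2^(k-1)) (c div 2^(n+1-K) * 2^(n+1-K))
     * (if k' = K then par (c div 2^(n-K)) else 1) * (if k' = k then par (t div 2^(k-2)) else 1)"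
proof -
  define R :: nat where "R = 2^(n+1-K)"
  define B :: nat where "B = 2^(k-1)"
  have R0: "R > 0" and B0: "B > 0" unfolding R_def B_def by simp_all
  have i: "(c div R * R) div 2^(n+1-k') = c div 2^(n+1-k')"
  proof -
    have e: "(2::nat)^(n+1-k') = R * 2^(K-k')" unfolding R_def by (rule pow2_split) (use kK Kn in simp)
    show ?thesis unfolding e by (rule div_round[OF R0])
  qed
  have ii: "(t div B * B) div 2^(k'-1) = t div 2^(k'-1)"
  proof -
    have e: "(2::nat)^(k'-1) = B * 2^(k'-k)" unfolding B_def by (rule pow2_split) (use kk k2 in simp)
    show ?thesis unfolding e by (rule div_round[OF B0])
  qed
  have iii: "par ((c div R * R) div 2^(n-k')) = (if k' = K then 1 else par (c div 2^(n-k')))"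
  proof (cases "k' = K")
    case True
    have s: "n+1-K = Suc (n-K)" using Kn by simp
    have e: "R = 2^(n-K) * 2" unfolding R_def s by simp
    have "(c div R * R) div 2^(n-K) = 2 * (c div R)"
      by (subst (2) e) simp
    then show ?thesis using True by simp
  next
    case False
    have e: "(2::nat)^(n-k') = R * 2^(K-1-k')" unfolding R_def by (rule pow2_split) (use kK Kn False in simp)
    show ?thesis unfolding e div_round[OF R0] using False by simp
  qed
  have iv: "par ((t div B * B) div 2^(k'-2)) = (if k' = k then 1 else par (t div 2^(k'-2)))"
  proof (cases "k' = k")
    case True
    have s: "k-1 = Suc (k-2)" using k2 by simp
    have e: "B = 2^(k-2) * 2" unfolding B_def s by simp
    have "(t div B * B) div 2^(k-2) = 2 * (t div B)"
      by (subst (2) e) simp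
    then show ?thesis using True by simp
  next
    case False
    have e: "(2::nat)^(k'-2) = B * 2^(k'-1-k)" unfolding B_def by (rule pow2_split) (use kk k2 False in simp)
    show ?thesis unfolding e div_round[OF B0] using False by simp
  qed
  show ?thesis
    unfolding ff_def R_def[symmetric] B_def[symmetric] i ii iii iv by (auto simp: par_def)
qed


lemma prod_struct:
  assumes fin: "finite S" and ne: "S \<noteq> {}" and rng: "\<And>k'. k' \<in> S \<Longrightarrow> 2 \<le> k' \<and> k' \<le> n"
  shows "(\<Prod>k'\<in>S. ff n hh x k' t c) =
     (\<Prod>k'\<in>S. ff n hh x k' (t div 2^(Min S - 1) * 2^(Min S - 1)) (c div 2^(n+1-Max S) * 2^(n+1-Max S)))
     * par (c div 2^(n - Max S)) * par (t div 2^(Min S - 2))"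
proof -
  let ?k = "Min S" and ?K = "Max S"
  have kS: "?k \<in> S" and KS: "?K \<in> S" using fin ne by auto
  have "(\<Prod>k'\<in>S. ff n hh x k' t c) = (\<Prod>k'\<in>S. ff n hh x k' (t div 2^(?k-1) * 2^(?k-1)) (c div 2^(n+1-?K) * 2^(n+1-?K))
     * (if k' = ?K then par (c div 2^(n-?K)) else 1) * (if k' = ?k then par (t div 2^(?k-2)) else 1))"
  proof (rule prod.cong[OF refl])
    fix k' assume k': "k' \<in> S"
    show "ff n hh x k' t c = ff n hh x k' (t div 2^(?k-1) * 2^(?k-1)) (c div 2^(n+1-?K) * 2^(n+1-?K))
     * (if k' = ?K then par (c div 2^(n-?K)) else 1) * (if k' = ?k then par (t div 2^(?k-2)) else 1)"
      by (rule fac) (use rng[OF kS] rng[OF KS] fin k' in auto)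
  qed
  also have "\<dots> = (\<Prod>k'\<in>S. ff n hh x k' (t div 2^(?k-1) * 2^(?k-1)) (c div 2^(n+1-?K) * 2^(n+1-?K)))
     * (\<Prod>k'\<in>S. (if k' = ?K then par (c div 2^(n-?K)) else 1)) * (\<Prod>k'\<in>S. (if k' = ?k then par (t div 2^(?k-2)) else 1))"
    by (simp add: prod.distrib)
  also have "\<dots> = (\<Prod>k'\<in>S. ff n hh x k' (t div 2^(?k-1) * 2^(?k-1)) (c div 2^(n+1-?K) * 2^(n+1-?K)))
     * par (c div 2^(n - ?K)) * par (t div 2^(?k - 2))"
    using fin kS KS by (simp add: prod.delta)
  finally show ?thesis .
qed

lemma emp_transfer:
  assumes k2: "2 \<le> k" and kK: "k \<le> K" and Kn: "K \<le> n" and hh: "hh > 0"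
    and E: "Emp n hh x k (a div 2^(K-k)) b"
    and j1: "b * 2^(k-1) < j" and j2: "j \<le> b * 2^(k-1) + 2^(k-1)"
  shows "x j \<le> real (a * 2^(n+1-K)) * hh \<or> x j \<ge> real ((a+1) * 2^(n+1-K)) * hh"
proof -
  define e :: nat where "e = 2^(K-k)"
  define R :: nat where "R = 2^(n+1-K)"
  have e0: "e > 0" unfolding e_def by simp
  have pe: "(2::nat)^(n+1-k) = R * e" unfolding R_def e_def by (rule pow2_split) (use kK Kn in simp)
  have le1: "(a div e) * e \<le> a" by (metis div_mult_mod_eq le_add1)
  have le2: "a + 1 \<le> (a div e + 1) * e"
  proof -
    have h1: "a div e * e + a mod e = a" by (rule div_mult_mod_eq)
    have "a mod e < e" using e0 by simp
    then have "a + 1 \<le> a div e * e + e" using h1 by linarith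
    then show ?thesis by (simp add: algebra_simps)
  qed
  have N1: "(a div e) * 2^(n+1-k) \<le> a * R"
  proof -
    have "(a div e) * 2^(n+1-k) = R * ((a div e) * e)" unfolding pe by (simp add: ac_simps)
    also have "\<dots> \<le> R * a" by (rule mult_le_mono2[OF le1])
    finally show ?thesis by (simp add: ac_simps)
  qed
  have N2: "(a+1) * R \<le> (a div e + 1) * 2^(n+1-k)"
  proof -
    have "(a+1) * R = R * (a+1)" by (simp add: ac_simps)
    also have "\<dots> \<le> R * ((a div e + 1) * e)" by (rule mult_le_mono2[OF le2])
    also have "\<dots> = (a div e + 1) * 2^(n+1-k)" unfolding pe by (simp add: algebra_simps)
    finally show ?thesis .
  qed
  have A1: "real ((a div e) * 2^(n+1-k)) \<le> real (a * R)" using N1 by (simp only: of_nat_le_iff)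
  have A2: "real ((a+1) * R) \<le> real ((a div e + 1) * 2^(n+1-k))" using N2 by (simp only: of_nat_le_iff)
  from E j1 j2 have "x j \<le> real ((a div e) * 2^(n+1-k)) * hh \<or> x j \<ge> real ((a div e + 1) * 2^(n+1-k)) * hh"
    unfolding Emp_def e_def by blast
  then show ?thesis
  proof
    assume "x j \<le> real ((a div e) * 2^(n+1-k)) * hh"
    moreover have "real ((a div e) * 2^(n+1-k)) * hh \<le> real (a * R) * hh" using A1 hh by (intro mult_right_mono) auto
    ultimately show ?thesis unfolding R_def by simp
  next
    assume "x j \<ge> real ((a div e + 1) * 2^(n+1-k)) * hh"
    moreover have "real ((a+1) * R) * hh \<le> real ((a div e + 1) * 2^(n+1-k)) * hh" using A2 hh by (intro mult_right_mono) auto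
    ultimately show ?thesis unfolding R_def by simp
  qed
qed


lemma QS:
  assumes fin: "finite S" and ne: "S \<noteq> {}" and rng: "\<And>k'. k' \<in> S \<Longrightarrow> 2 \<le> k' \<and> k' \<le> n"
    and hh: "hh > 0"
  shows "(\<Sum>t<2^n. \<Sum>c<2^(n+1). (\<Prod>k'\<in>S. ff n hh x k' t c) * PP hh x (t+1) c)
   = - ((hh * real (2^(n - Max S)) * real (2^(Min S - 2))) * (hh * real (2^(n - Max S)) * real (2^(Min S - 2))))
     * (\<Sum>a<2^(Max S). \<Sum>b<2^(n+1-Min S). \<Prod>k'\<in>S. ff n hh x k' (b * 2^(Min S - 1)) (a * 2^(n+1-Max S)))"
proof -
  define k where "k = Min S"
  define K where "K = Max S"
  have kS: "k \<in> S" and KS: "K \<in> S" using fin ne unfolding k_def K_def by auto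
  have k2: "2 \<le> k" and Kn: "K \<le> n" using rng[OF kS] rng[OF KS] by auto
  have kK: "k \<le> K" using fin ne unfolding k_def K_def by simp
  define q :: nat where "q = 2^(n-K)"
  define bt :: nat where "bt = 2^(k-2)"
  have q0: "q > 0" and bt0: "bt > 0" unfolding q_def bt_def by auto
  have e1: "2*q = 2^(n+1-K)"
  proof -
    have s: "n+1-K = Suc (n-K)" using Kn by simp
    show ?thesis unfolding q_def s by simp
  qed
  have e2: "2*bt = 2^(k-1)"
  proof -
    have s: "k-1 = Suc (k-2)" using k2 by simp
    show ?thesis unfolding bt_def s by simp
  qed
  have e3: "(2::nat)^n = 2^(n+1-k) * (2*bt)" unfolding e2 by (rule pow2_split) (use k2 kK Kn in simp)
  have e4: "(2::nat)^(n+1) = 2^K * (2*q)" unfolding e1 by (rule pow2_split) (use Kn in simp)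
  define \<kappa> where "\<kappa> a b = (\<Prod>k'\<in>S. ff n hh x k' (b * 2^(k-1)) (a * 2^(n+1-K)))" for a b
  have "(\<Sum>t<2^n. \<Sum>c<2^(n+1). (\<Prod>k'\<in>S. ff n hh x k' t c) * PP hh x (t+1) c)
      = (\<Sum>t<2^(n+1-k) * (2*bt). \<Sum>c<2^K * (2*q). \<kappa> (c div (2*q)) (t div (2*bt)) * par (c div q) * par (t div bt) * PP hh x (t+1) c)"
    unfolding e3[symmetric] e4[symmetric]
  proof (intro sum.cong refl)
    fix t c
    have "(\<Prod>k'\<in>S. ff n hh x k' t c) = (\<Prod>k'\<in>S. ff n hh x k' (t div 2^(k-1) * 2^(k-1)) (c div 2^(n+1-K) * 2^(n+1-K)))
       * par (c div 2^(n-K)) * par (t div 2^(k-2))"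
      using prod_struct[OF fin ne rng] unfolding k_def K_def .
    then show "(\<Prod>k'\<in>S. ff n hh x k' t c) * PP hh x (t+1) c
       = \<kappa> (c div (2*q)) (t div (2*bt)) * par (c div q) * par (t div bt) * PP hh x (t+1) c"
      unfolding \<kappa>_def e1 e2 unfolding q_def bt_def by simp
  qed
  also have "\<dots> = - ((hh * real q * real bt) * (hh * real q * real bt)) * (\<Sum>a<2^K. \<Sum>b<2^(n+1-k). \<kappa> a b)"
  proof (rule rect[OF q0 bt0 hh])
    fix a b j assume a: "a < 2^K" and b: "b < 2^(n+1-k)" and kne: "\<kappa> a b \<noteq> 0"
      and j1: "b*(2*bt) < j" and j2: "j \<le> b*(2*bt) + 2*bt"
    have "ff n hh x k (b * 2^(k-1)) (a * 2^(n+1-K)) \<noteq> 0"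
      using kne kS fin unfolding \<kappa>_def by (auto simp: prod_zero_iff)
    then have E0: "Emp n hh x k ((a * 2^(n+1-K)) div 2^(n+1-k)) ((b * 2^(k-1)) div 2^(k-1))"
      unfolding ff_def by (auto split: if_splits)
    have d1: "(b * 2^(k-1)) div 2^(k-1) = b" by simp
    have d2: "(a * 2^(n+1-K)) div 2^(n+1-k) = a div 2^(K-k)"
    proof -
      have p: "(2::nat)^(n+1-k) = 2^(n+1-K) * 2^(K-k)" by (rule pow2_split) (use kK Kn in simp)
      show ?thesis unfolding p by (simp add: div_mult2_eq)
    qed
    have E: "Emp n hh x k (a div 2^(K-k)) b" using E0 unfolding d1 d2 .
    show "x j \<le> real (a*(2*q)) * hh \<or> x j \<ge> real ((a+1)*(2*q)) * hh"
      unfolding e1 by (rule emp_transfer[OF k2 kK Kn hh E]) (use j1 j2 e2 in auto)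
  qed
  finally show ?thesis unfolding q_def bt_def \<kappa>_def k_def K_def .
qed

lemma count_nonempty:
  assumes hh: "hh > 0"
  shows "card {a. a < 2^k \<and> \<not> Emp n hh x k a b} \<le> 2^(k-1)"
proof -
  define w where "w = real (2^(n+1-k)) * hh"
  have w0: "w > 0" unfolding w_def using hh by simp
  let ?A = "{a. a < 2^k \<and> \<not> Emp n hh x k a b}"
  let ?J = "{b * 2^(k-1)<..b * 2^(k-1) + 2^(k-1)}"
  have ex: "\<exists>j\<in>?J. real a * w < x j \<and> x j < real (a+1) * w" if "a \<in> ?A" for a
    using that unfolding Emp_def w_def by (auto simp: not_le algebra_simps)
  define f where "f a = (SOME j. j \<in> ?J \<and> real a * w < x j \<and> x j < real (a+1) * w)" for a
  have f: "f a \<in> ?J \<and> real a * w < x (f a) \<and> x (f a) < real (a+1) * w" if "a \<in> ?A" for a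
    unfolding f_def using someI_ex[OF ex[OF that, unfolded Bex_def]] by blast
  have inj: "inj_on f ?A"
  proof (rule inj_onI)
    fix a a' assume a: "a \<in> ?A" and a': "a' \<in> ?A" and eq: "f a = f a'"
    have xe: "x (f a) = x (f a')" using eq by simp
    have "real a * w < real (a'+1) * w" using f[OF a] f[OF a'] xe by linarith
    then have "real a < real (a'+1)" using w0 by simp
    moreover have "real a' * w < real (a+1) * w" using f[OF a] f[OF a'] xe by linarith
    then have "real a' < real (a+1)" using w0 by simp
    ultimately show "a = a'" by linarith
  qed
  have "card ?A \<le> card ?J"
    by (rule card_inj_on_le[OF inj]) (use f in auto)
  then show ?thesis by simp
qed

lemma count_empty:
  assumes hh: "hh > 0" and k2: "2 \<le> k" and kn: "k \<le> n"
  shows "(\<Sum>a<2^k. \<Sum>b<2^(n+1-k). (if Emp n hh x k a b then 1 else 0::real)) \<ge> 2^n"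
proof -
  have per_b: "(\<Sum>a<2^k. (if Emp n hh x k a b then 1 else 0::real)) \<ge> 2^(k-1)" for b
  proof -
    let ?E = "{a. a < (2::nat)^k \<and> Emp n hh x k a b}" and ?N = "{a. a < (2::nat)^k \<and> \<not> Emp n hh x k a b}"
    have fE: "finite ?E" and fN: "finite ?N" by auto
    have un: "?E \<union> ?N = {..<2^k}" by auto
    have "card ?E + card ?N = card (?E \<union> ?N)"
      by (rule card_Un_disjoint[symmetric, OF fE fN]) auto
    then have "card ?E + card ?N = 2^k" unfolding un by simp
    moreover have "(2::nat)^k = 2^(k-1) + 2^(k-1)"
    proof -
      have "k = Suc (k-1)" using k2 by simp
      then show ?thesis by (metis mult_2 power_Suc)
    qed
    ultimately have "card {a. a < (2::nat)^k \<and> Emp n hh x k a b} \<ge> 2^(k-1)"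
      using count_nonempty[OF hh, of k n x b] by linarith
    moreover have "(\<Sum>a<2^k. (if Emp n hh x k a b then 1 else 0::real)) = real (card {a. a < (2::nat)^k \<and> Emp n hh x k a b})"
    proof -
      have "(\<Sum>a<2^k. (if Emp n hh x k a b then 1 else 0::real)) = (\<Sum>a\<in>{a\<in>{..<2^k}. Emp n hh x k a b}. 1)"
        by (rule sum.inter_filter[symmetric]) simp
      also have "{a\<in>{..<(2::nat)^k}. Emp n hh x k a b} = {a. a < (2::nat)^k \<and> Emp n hh x k a b}" by auto
      finally show ?thesis by simp
    qed
    ultimately show ?thesis by (metis of_nat_le_iff of_nat_numeral of_nat_power)
  qed
  have "(\<Sum>a<2^k. \<Sum>b<2^(n+1-k). (if Emp n hh x k a b then 1 else 0::real))
      = (\<Sum>b<2^(n+1-k). \<Sum>a<2^k. (if Emp n hh x k a b then 1 else 0::real))" by (rule sum.swap)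
  also have "\<dots> \<ge> (\<Sum>b<(2::nat)^(n+1-k). 2^(k-1))" by (intro sum_mono per_b)
  finally have "(\<Sum>a<2^k. \<Sum>b<2^(n+1-k). (if Emp n hh x k a b then 1 else 0::real)) \<ge> real (2^(n+1-k)) * 2^(k-1)"
    by simp
  moreover have "real (2^(n+1-k)) * 2^(k-1) = (2::real)^n"
  proof -
    have "(2::nat)^n = 2^(n+1-k) * 2^(k-1)" by (rule pow2_split) (use k2 kn in simp)
    then show ?thesis by (metis of_nat_mult of_nat_numeral of_nat_power)
  qed
  ultimately show ?thesis by simp
qed


lemma ff_abs: "\<bar>ff n hh x k t c\<bar> \<le> 1"
  unfolding ff_def by (auto simp: abs_mult)

lemma single:
  assumes k2: "2 \<le> k" and kn: "k \<le> n"
  shows "(\<Sum>t<2^n. \<Sum>c<2^(n+1). ff n (1/2^(n+1)) x k t c * PP (1/2^(n+1)) x (t+1) c) \<le> - (2^n / 64)"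
proof -
  define hh :: real where "hh = 1/2^(n+1)"
  have hh0: "hh > 0" unfolding hh_def by simp
  have Q: "(\<Sum>t<2^n. \<Sum>c<2^(n+1). (\<Prod>k'\<in>{k}. ff n hh x k' t c) * PP hh x (t+1) c)
   = - ((hh * real (2^(n - Max {k})) * real (2^(Min {k} - 2))) * (hh * real (2^(n - Max {k})) * real (2^(Min {k} - 2))))
     * (\<Sum>a<2^(Max {k}). \<Sum>b<2^(n+1-Min {k}). \<Prod>k'\<in>{k}. ff n hh x k' (b * 2^(Min {k} - 1)) (a * 2^(n+1-Max {k})))"
    by (rule QS) (use k2 kn hh0 in auto)
  have V: "hh * real (2^(n - k)) * real (2^(k - 2)) = 1/8"
  proof -
    have e: "n+1 = 3 + (n-k) + (k-2)" using k2 kn by simp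
    have "(2::real)^(n+1) = 2^3 * 2^(n-k) * 2^(k-2)" by (subst e) (simp only: power_add)
    then show ?thesis unfolding hh_def by simp
  qed
  have kap: "ff n hh x k (b * 2^(k - 1)) (a * 2^(n+1-k)) = (if Emp n hh x k a b then 1 else 0)" for a b
  proof -
    have s1: "n+1-k = Suc (n-k)" using kn by simp
    have s2: "k-1 = Suc (k-2)" using k2 by simp
    have d1: "(a * 2^(n+1-k)) div 2^(n-k) = 2 * a" unfolding s1 by simp
    have d2: "(b * 2^(k-1)) div 2^(k-2) = 2 * b" unfolding s2 by simp
    show ?thesis unfolding ff_def d1 d2 by simp
  qed
  have "(\<Sum>t<2^n. \<Sum>c<2^(n+1). ff n hh x k t c * PP hh x (t+1) c)
      = - (1/64) * (\<Sum>a<2^k. \<Sum>b<2^(n+1-k). (if Emp n hh x k a b then 1 else 0::real))"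
  proof -
    have mm: "Min {k} = k" "Max {k} = k" by simp_all
    have "(\<Sum>t<2^n. \<Sum>c<2^(n+1). ff n hh x k t c * PP hh x (t+1) c)
      = - ((hh * real (2^(n - k)) * real (2^(k - 2))) * (hh * real (2^(n - k)) * real (2^(k - 2))))
       * (\<Sum>a<2^k. \<Sum>b<2^(n+1-k). ff n hh x k (b * 2^(k - 1)) (a * 2^(n+1-k)))"
      using Q unfolding mm by simp
    then show ?thesis unfolding kap V by simp
  qed
  also have "\<dots> \<le> - (1/64) * 2^n" using count_empty[OF hh0 k2 kn, of x] by simp
  finally show ?thesis unfolding hh_def by simp
qed


lemma multi_bound:
  assumes fin: "finite S" and ne: "S \<noteq> {}" and rng: "\<And>k'. k' \<in> S \<Longrightarrow> 2 \<le> k' \<and> k' \<le> n"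
    and gap: "Min S + m \<le> Max S"
  shows "\<bar>\<Sum>t<2^n. \<Sum>c<2^(n+1). (\<Prod>k'\<in>S. ff n (1/2^(n+1)) x k' t c) * PP (1/2^(n+1)) x (t+1) c\<bar> \<le> 2^n / (32 * 2^m)"
proof -
  define hh :: real where "hh = 1/2^(n+1)"
  have hh0: "hh > 0" unfolding hh_def by simp
  define k where "k = Min S"
  define K where "K = Max S"
  have kS: "k \<in> S" and KS: "K \<in> S" using fin ne unfolding k_def K_def by auto
  have k2: "2 \<le> k" and Kn: "K \<le> n" using rng[OF kS] rng[OF KS] by auto
  have gap': "k + m \<le> K" using gap unfolding k_def K_def .
  define V where "V = hh * real (2^(n - K)) * real (2^(k - 2))"
  define \<kappa> where "\<kappa> a b = (\<Prod>k'\<in>S. ff n hh x k' (b * 2^(k - 1)) (a * 2^(n+1-K)))" for a b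
  have Q: "(\<Sum>t<2^n. \<Sum>c<2^(n+1). (\<Prod>k'\<in>S. ff n hh x k' t c) * PP hh x (t+1) c)
      = - (V * V) * (\<Sum>a<2^K. \<Sum>b<2^(n+1-k). \<kappa> a b)"
    unfolding V_def \<kappa>_def k_def K_def by (rule QS[OF fin ne rng hh0])
  have kab: "\<bar>\<kappa> a b\<bar> \<le> 1" for a b
    unfolding \<kappa>_def abs_prod by (rule prod_le_1) (auto intro: ff_abs)
  have "\<bar>\<Sum>a<2^K. \<Sum>b<2^(n+1-k). \<kappa> a b\<bar> \<le> (\<Sum>a<(2::nat)^K. \<Sum>b<(2::nat)^(n+1-k). (1::real))"
    by (rule order_trans[OF sum_abs]) (intro sum_mono order_trans[OF sum_abs] sum_mono kab)
  also have "\<dots> = 2^K * 2^(n+1-k)" by simp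
  finally have sk: "\<bar>\<Sum>a<2^K. \<Sum>b<2^(n+1-k). \<kappa> a b\<bar> \<le> 2^K * 2^(n+1-k)" .
  have num: "V * V * (2^K * 2^(n+1-k)) \<le> 2^n / (32 * 2^m)"
  proof -
    define P :: real where "P = 2^(n-K) * 2^(k-2)"
    have VP: "V = P / 2^(n+1)" unfolding V_def P_def hh_def by simp
    have eL: "P * P * 2^K * 2^(n+1-k) * (32 * 2^m) = (2::real)^((n-K)+(n-K)+(k-2)+(k-2)+K+(n+1-k)+5+m)"
      unfolding P_def by (simp only: power_add) simp
    have eR: "2^n * (2^(n+1) * 2^(n+1)) = (2::real)^(n+(n+1)+(n+1))"
      by (simp only: power_add)
    have ex: "(n-K)+(n-K)+(k-2)+(k-2)+K+(n+1-k)+5+m \<le> n+(n+1)+(n+1)"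
      using k2 Kn gap' by simp
    have "P * P * 2^K * 2^(n+1-k) * (32 * 2^m) \<le> 2^n * (2^(n+1) * 2^(n+1))"
      unfolding eL eR by (rule power_increasing[OF ex]) simp
    then show ?thesis unfolding VP by (simp add: field_simps)
  qed
  have "\<bar>\<Sum>t<2^n. \<Sum>c<2^(n+1). (\<Prod>k'\<in>S. ff n hh x k' t c) * PP hh x (t+1) c\<bar>
      = V * V * \<bar>\<Sum>a<2^K. \<Sum>b<2^(n+1-k). \<kappa> a b\<bar>"
    unfolding Q by (simp add: abs_mult)
  also have "\<dots> \<le> V * V * (2^K * 2^(n+1-k))" by (rule mult_left_mono[OF sk]) simp
  also have "\<dots> \<le> 2^n / (32 * 2^m)" by (rule num)
  finally show ?thesis unfolding hh_def .
qed

definition GG :: "nat set \<Rightarrow> real \<Rightarrow> (nat \<Rightarrow> real) \<Rightarrow> real" where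
  "GG L \<gamma> F = Im (\<Prod>k\<in>L. (1 + \<i> * complex_of_real (\<gamma> * F k)))"

lemma Im_mult_ofr: "Im (z * complex_of_real r) = Im z * r"
  by simp

lemma GG_expand:
  assumes fin: "finite L"
  shows "GG L \<gamma> F = (\<Sum>X\<in>Pow L. Im (\<i> ^ card X) * (\<gamma> ^ card X * (\<Prod>k\<in>X. F k)))"
proof -
  have "(\<Prod>k\<in>L. (1 + \<i> * complex_of_real (\<gamma> * F k))) = (\<Prod>k\<in>L. (\<i> * complex_of_real (\<gamma> * F k) + 1))"
    by (simp add: add.commute)
  also have "\<dots> = (\<Sum>X\<in>Pow L. (\<Prod>k\<in>X. \<i> * complex_of_real (\<gamma> * F k)) * (\<Prod>k\<in>L-X. 1))"
    by (rule prod_add[OF fin])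
  also have "\<dots> = (\<Sum>X\<in>Pow L. \<i> ^ card X * complex_of_real (\<gamma> ^ card X * (\<Prod>k\<in>X. F k)))"
  proof (rule sum.cong[OF refl])
    fix X assume "X \<in> Pow L"
    show "(\<Prod>k\<in>X. \<i> * complex_of_real (\<gamma> * F k)) * (\<Prod>k\<in>L-X. 1) = \<i> ^ card X * complex_of_real (\<gamma> ^ card X * (\<Prod>k\<in>X. F k))"
      by (simp add: prod.distrib)
  qed
  finally show ?thesis unfolding GG_def by (simp only: Im_sum Im_mult_ofr)
qed

lemma norm_factor: "(cmod (1 + \<i> * complex_of_real r))^2 = 1 + r^2"
  by (simp add: cmod_power2)

lemma GG_bound:
  assumes fin: "finite L" and F: "\<And>k. \<bar>F k\<bar> \<le> 1" and g: "\<gamma>^2 * real (card L) \<le> 1"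
  shows "\<bar>GG L \<gamma> F\<bar> \<le> 2"
proof -
  let ?z = "\<Prod>k\<in>L. (1 + \<i> * complex_of_real (\<gamma> * F k))"
  have "(cmod ?z)^2 = (\<Prod>k\<in>L. (cmod (1 + \<i> * complex_of_real (\<gamma> * F k)))^2)"
    by (simp add: prod_norm[symmetric] prod_power_distrib)
  also have "\<dots> = (\<Prod>k\<in>L. 1 + (\<gamma> * F k)^2)" by (intro prod.cong refl) (rule norm_factor)
  also have "\<dots> \<le> (\<Prod>k\<in>L. 1 + \<gamma>^2)"
  proof (rule prod_mono)
    fix k assume "k \<in> L"
    have "(F k)^2 \<le> 1" using F[of k] by (simp add: abs_square_le_1)
    then have "\<gamma>^2 * (F k)^2 \<le> \<gamma>^2 * 1" by (intro mult_left_mono) auto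
    then show "0 \<le> 1 + (\<gamma> * F k)^2 \<and> 1 + (\<gamma> * F k)^2 \<le> 1 + \<gamma>^2"
      by (simp add: power_mult_distrib)
  qed
  also have "\<dots> = (1 + \<gamma>^2) ^ card L" by simp
  also have "\<dots> \<le> exp (\<gamma>^2) ^ card L"
    by (rule power_mono) (auto simp: add.commute exp_ge_add_one_self)
  also have "\<dots> = exp (\<gamma>^2 * real (card L))" by (simp add: exp_of_nat_mult[symmetric] mult.commute)
  also have "\<dots> \<le> exp 1" using g by simp
  also have "\<dots> \<le> 3" by (rule exp_le)
  finally have "(cmod ?z)^2 \<le> 3" .
  then have "(cmod ?z)^2 \<le> 2^2" by simp
  then have "cmod ?z \<le> 2" by (rule power2_le_imp_le) simp
  moreover have "\<bar>Im ?z\<bar> \<le> cmod ?z" by (rule abs_Im_le_cmod)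
  ultimately show ?thesis unfolding GG_def by simp
qed


definition lvset :: "nat \<Rightarrow> nat set" where "lvset m = (\<lambda>i. 2 + m*i) ` {..<m}"

lemma lv_finite: "finite (lvset m)" unfolding lvset_def by simp

lemma lv_card: "m \<ge> 1 \<Longrightarrow> card (lvset m) = m"
  unfolding lvset_def by (subst card_image) (auto simp: inj_on_def)

lemma lv_range: "k \<in> lvset m \<Longrightarrow> 2 \<le> k \<and> k \<le> 2 + m*m"
  unfolding lvset_def by auto

lemma lv_gap:
  assumes m: "m \<ge> 1" and X: "X \<subseteq> lvset m" and c: "card X \<ge> 2"
  shows "Min X + m \<le> Max X"
proof -
  have fin: "finite X" using X lv_finite finite_subset by blast
  have ne: "X \<noteq> {}" using c by auto
  have mn: "Min X \<noteq> Max X"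
  proof
    assume eq: "Min X = Max X"
    have "X \<subseteq> {Min X}"
    proof
      fix y assume "y \<in> X"
      then have "Min X \<le> y" "y \<le> Max X" using fin by auto
      then show "y \<in> {Min X}" using eq by simp
    qed
    then have "card X \<le> 1" using card_mono[of "{Min X}" X] by (simp add: card_mono subset_singletonD)
    with c show False by simp
  qed
  have lt: "Min X < Max X" using mn fin ne by (meson Min_le Max_in le_neq_implies_less)
  obtain i0 where i0: "i0 < m" "Min X = 2 + m*i0" using Min_in[OF fin ne] X unfolding lvset_def by auto
  obtain i1 where i1: "i1 < m" "Max X = 2 + m*i1" using Max_in[OF fin ne] X unfolding lvset_def by auto
  have "m*i0 < m*i1" using lt i0 i1 by simp
  then have "i0 < i1" by simp
  then have "m*(i0+1) \<le> m*i1" by (intro mult_le_mono2) simp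
  then show ?thesis using i0 i1 by (simp add: algebra_simps)
qed

lemma Q_expand:
  assumes fin: "finite L"
  shows "(\<Sum>t<T. \<Sum>c<K. GG L \<gamma> (\<lambda>k. ff n hh x k t c) * PP hh x (t+1) c)
    = (\<Sum>X\<in>Pow L. Im (\<i> ^ card X) * \<gamma> ^ card X * (\<Sum>t<T. \<Sum>c<K. (\<Prod>k\<in>X. ff n hh x k t c) * PP hh x (t+1) c))"
proof -
  have "(\<Sum>t<T. \<Sum>c<K. GG L \<gamma> (\<lambda>k. ff n hh x k t c) * PP hh x (t+1) c)
     = (\<Sum>t<T. \<Sum>c<K. \<Sum>X\<in>Pow L. Im (\<i> ^ card X) * \<gamma> ^ card X * ((\<Prod>k\<in>X. ff n hh x k t c) * PP hh x (t+1) c))"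
    unfolding GG_expand[OF fin] by (simp add: sum_distrib_right sum_distrib_left mult_ac)
  also have "\<dots> = (\<Sum>X\<in>Pow L. \<Sum>t<T. \<Sum>c<K. Im (\<i> ^ card X) * \<gamma> ^ card X * ((\<Prod>k\<in>X. ff n hh x k t c) * PP hh x (t+1) c))"
    by (subst sum.swap) (simp add: sum.swap[of _ "Pow L"])
  also have "\<dots> = (\<Sum>X\<in>Pow L. Im (\<i> ^ card X) * \<gamma> ^ card X * (\<Sum>t<T. \<Sum>c<K. (\<Prod>k\<in>X. ff n hh x k t c) * PP hh x (t+1) c))"
    by (simp add: sum_distrib_left)
  finally show ?thesis .
qed

lemma sum_singletons:
  assumes fin: "finite L"
  shows "(\<Sum>X\<in>Pow L. if card X = 1 then f X else 0) = (\<Sum>k\<in>L. f {k})"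
proof -
  have "(\<Sum>X\<in>Pow L. if card X = 1 then f X else 0) = (\<Sum>X\<in>{X\<in>Pow L. card X = 1}. f X)"
    by (rule sum.inter_filter[symmetric]) (use fin in simp)
  also have "{X\<in>Pow L. card X = 1} = (\<lambda>k. {k}) ` L" by (auto simp: card_Suc_eq)
  also have "(\<Sum>X\<in>(\<lambda>k. {k}) ` L. f X) = (\<Sum>k\<in>L. f {k})"
    by (rule sum.reindex_cong[where l="\<lambda>k. {k}"]) (auto simp: inj_on_def)
  finally show ?thesis .
qed


lemma abs_Im_i_pow: "\<bar>Im (\<i> ^ j)\<bar> \<le> 1"
proof -
  have "\<bar>Im (\<i> ^ j)\<bar> \<le> cmod (\<i> ^ j)" by (rule abs_Im_le_cmod)
  also have "\<dots> = 1" by (simp add: norm_power)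
  finally show ?thesis .
qed

lemma Q_upper:
  assumes m: "m \<ge> 1" and g0: "0 \<le> \<gamma>" and g1: "\<gamma> \<le> 1"
  shows "(\<Sum>t<2^(2+m*m). \<Sum>c<2^(2+m*m+1). GG (lvset m) \<gamma> (\<lambda>k. ff (2+m*m) (1/2^(2+m*m+1)) x k t c)
           * PP (1/2^(2+m*m+1)) x (t+1) c) \<le> - \<gamma> * real m * 2^(2+m*m) / 64 + 2^(2+m*m) / 32"
proof -
  define n where "n = 2 + m*m"
  define hh :: real where "hh = 1/2^(n+1)"
  define L where "L = lvset m"
  define B :: real where "B = 2^n / (32 * 2^m)"
  have finL: "finite L" unfolding L_def by (rule lv_finite)
  have cardL: "card L = m" unfolding L_def by (rule lv_card[OF m])
  have rngL: "k \<in> L \<Longrightarrow> 2 \<le> k \<and> k \<le> n" for k unfolding L_def n_def by (rule lv_range)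
  define QS where "QS X = (\<Sum>t<2^n. \<Sum>c<2^(n+1). (\<Prod>k\<in>X. ff n hh x k t c) * PP hh x (t+1) c)" for X
  have Qe: "(\<Sum>t<2^n. \<Sum>c<2^(n+1). GG L \<gamma> (\<lambda>k. ff n hh x k t c) * PP hh x (t+1) c)
      = (\<Sum>X\<in>Pow L. Im (\<i> ^ card X) * \<gamma> ^ card X * QS X)"
    unfolding QS_def by (rule Q_expand[OF finL])
  have TU: "Im (\<i> ^ card X) * \<gamma> ^ card X * QS X \<le> (if card X = 1 then \<gamma> * QS X else 0) + (if card X = 1 then 0 else B)"
    if X: "X \<in> Pow L" for X
  proof -
    have B0: "B \<ge> 0" unfolding B_def by simp
    consider "card X = 0" | "card X = 1" | "card X \<ge> 2" by linarith
    then show ?thesis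
    proof cases
      case 1 then show ?thesis using B0 by simp
    next
      case 2 then show ?thesis by simp
    next
      case 3
      have finX: "finite X" using X finL finite_subset by auto
      have neX: "X \<noteq> {}" using 3 by auto
      have gapX: "Min X + m \<le> Max X" using lv_gap[OF m _ 3] X unfolding L_def by auto
      have "\<bar>QS X\<bar> \<le> B" unfolding QS_def B_def hh_def
        by (rule multi_bound[OF finX neX _ gapX]) (use X rngL in auto)
      have "Im (\<i> ^ card X) * \<gamma> ^ card X * QS X \<le> \<bar>Im (\<i> ^ card X) * \<gamma> ^ card X * QS X\<bar>" by simp
      also have "\<dots> = \<bar>Im (\<i> ^ card X)\<bar> * \<gamma> ^ card X * \<bar>QS X\<bar>" using g0 by (simp add: abs_mult)
      also have "\<dots> \<le> 1 * 1 * B"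
        by (intro mult_mono abs_Im_i_pow power_le_one g0 g1 \<open>\<bar>QS X\<bar> \<le> B\<close>) (auto simp: g0)
      finally show ?thesis using 3 by simp
    qed
  qed
  have "(\<Sum>X\<in>Pow L. Im (\<i> ^ card X) * \<gamma> ^ card X * QS X)
      \<le> (\<Sum>X\<in>Pow L. (if card X = 1 then \<gamma> * QS X else 0) + (if card X = 1 then 0 else B))"
    by (rule sum_mono) (rule TU)
  also have "\<dots> = (\<Sum>X\<in>Pow L. (if card X = 1 then \<gamma> * QS X else 0)) + (\<Sum>X\<in>Pow L. (if card X = 1 then 0 else B))"
    by (rule sum.distrib)
  also have "(\<Sum>X\<in>Pow L. (if card X = 1 then \<gamma> * QS X else 0)) = (\<Sum>k\<in>L. \<gamma> * QS {k})"
    by (rule sum_singletons[OF finL])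
  also have "(\<Sum>k\<in>L. \<gamma> * QS {k}) \<le> (\<Sum>k\<in>L. \<gamma> * (- (2^n / 64)))"
  proof (rule sum_mono)
    fix k assume k: "k \<in> L"
    have "QS {k} \<le> - (2^n / 64)" unfolding QS_def hh_def using single[of k n x] rngL[OF k] by simp
    then show "\<gamma> * QS {k} \<le> \<gamma> * (- (2^n / 64))" using g0 by (rule mult_left_mono)
  qed
  also have "(\<Sum>X\<in>Pow L. (if card X = 1 then 0 else B)) \<le> (\<Sum>X\<in>Pow L. B)"
    by (rule sum_mono) (auto simp: B_def)
  also have "(\<Sum>X\<in>Pow L. B) = 2^m * B" using finL cardL by (simp add: card_Pow)
  finally have "(\<Sum>X\<in>Pow L. Im (\<i> ^ card X) * \<gamma> ^ card X * QS X) \<le> real m * (\<gamma> * (- (2^n / 64))) + 2^m * B"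
    using cardL by simp
  also have "\<dots> = - \<gamma> * real m * 2^n / 64 + 2^n / 32" unfolding B_def by (simp add: field_simps)
  finally show ?thesis using Qe unfolding n_def hh_def L_def by simp
qed


lemma no_good:
  assumes x: "\<forall>n\<ge>1. x n \<in> {0..1}"
    and small: "\<And>N \<delta>. N \<ge> 1 \<Longrightarrow> \<delta> > 0 \<Longrightarrow>
        \<exists>\<pi>\<in>couplings (empirical x N) lambda1. (\<integral>z. \<bar>fst z - snd z\<bar> \<partial>\<pi>) \<le> C / real N + \<delta>"
  shows False
proof -
  define r0 :: nat where "r0 = nat \<lceil>128 * \<bar>C\<bar>\<rceil> + 3"
  define m :: nat where "m = r0 * r0"
  define r :: real where "r = real r0"
  have r3: "r \<ge> 128 * \<bar>C\<bar> + 3" unfolding r_def r0_def by (simp add: of_nat_nat)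
  have rpos: "r > 0" using r3 by (smt (verit) abs_ge_zero)
  have m1: "m \<ge> 1" unfolding m_def r0_def by simp
  have mr: "real m = r * r" unfolding m_def r_def by simp
  define \<gamma> :: real where "\<gamma> = 1 / r"
  have g0: "0 \<le> \<gamma>" and g1: "\<gamma> \<le> 1" unfolding \<gamma>_def using r3 rpos by (auto simp: field_simps)
  have gm: "\<gamma> * real m = r" unfolding \<gamma>_def mr using rpos by simp
  define n where "n = 2 + m*m"
  define hh :: real where "hh = 1/2^(n+1)"
  define L where "L = lvset m"
  define Q where "Q = (\<Sum>t<2^n. \<Sum>c<2^(n+1). GG L \<gamma> (\<lambda>k. ff n hh x k t c) * PP hh x (t+1) c)"
  have finL: "finite L" unfolding L_def by (rule lv_finite)
  have cardL: "card L = m" unfolding L_def by (rule lv_card[OF m1])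
  have gL: "\<gamma>^2 * real (card L) \<le> 1" unfolding cardL mr \<gamma>_def using rpos by (simp add: power2_eq_square)
  have hh0: "hh > 0" unfolding hh_def by simp
  have Kh: "real ((2::nat)^(n+1)) * hh = 1" unfolding hh_def by simp
  have each: "\<bar>\<Sum>c<2^(n+1). GG L \<gamma> (\<lambda>k. ff n hh x k t c) * PP hh x (t+1) c\<bar> \<le> 2 * C" for t
  proof (rule step_good[OF _ x _ hh0 Kh])
    show "1 \<le> t + 1" by simp
    show "\<And>\<delta>. 0 < \<delta> \<Longrightarrow> \<exists>\<pi>\<in>couplings (empirical x (t + 1)) lambda1. (\<integral>z. \<bar>fst z - snd z\<bar> \<partial>\<pi>) \<le> C / real (t + 1) + \<delta>"
      by (rule small) auto
    show "\<bar>GG L \<gamma> (\<lambda>k. ff n hh x k t c)\<bar> \<le> 2" for c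
      by (rule GG_bound[OF finL ff_abs gL])
  qed
  have "- Q \<le> \<bar>Q\<bar>" by simp
  also have "\<bar>Q\<bar> \<le> (\<Sum>t<(2::nat)^n. \<bar>\<Sum>c<2^(n+1). GG L \<gamma> (\<lambda>k. ff n hh x k t c) * PP hh x (t+1) c\<bar>)"
    unfolding Q_def by (rule sum_abs)
  also have "\<dots> \<le> (\<Sum>t<(2::nat)^n. 2 * C)" by (rule sum_mono) (rule each)
  also have "\<dots> = 2^n * (2 * C)" by simp
  finally have lo: "- (2^n * (2 * C)) \<le> Q" by simp
  have up: "Q \<le> - \<gamma> * real m * 2^n / 64 + 2^n / 32"
    unfolding Q_def n_def hh_def L_def by (rule Q_upper[OF m1 g0 g1])
  have "- (2^n * (2 * C)) \<le> - r * 2^n / 64 + 2^n / 32" using lo up gm by (simp add: mult.assoc)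
  then have "r * 2^n / 64 \<le> 2^n * (2 * C) + 2^n / 32" by simp
  then have "r * 2^n \<le> 2^n * (128 * C + 2)" by (simp add: field_simps)
  then have "r \<le> 128 * C + 2" by simp
  with r3 show False by (smt (verit) abs_ge_self mult_left_mono)
qed

theorem proposition1p5:
  shows "(\<forall>p::real. 1 \<le> p \<longrightarrow>
            \<not> (\<exists>(x::nat \<Rightarrow> real) (C::real). (\<forall>n\<ge>1. x n \<in> {0..1}) \<and>
                  (\<forall>N::nat\<ge>1. Wp p (empirical x N) lambda1 \<le> C * (1 / real N))))
       \<and> \<not> (\<exists>(x::nat \<Rightarrow> real) (C::real). (\<forall>n\<ge>1. x n \<in> {0..1}) \<and>
                  (\<forall>N::nat\<ge>1. Winf (empirical x N) lambda1 \<le> ereal (C * (1 / real N))))"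
proof (intro conjI allI impI notI)
  fix p :: real
  assume p: "1 \<le> p"
  assume "\<exists>(x::nat \<Rightarrow> real) (C::real). (\<forall>n\<ge>1. x n \<in> {0..1}) \<and>
                  (\<forall>N::nat\<ge>1. Wp p (empirical x N) lambda1 \<le> C * (1 / real N))"
  then obtain x :: "nat \<Rightarrow> real" and C :: real where x: "\<forall>n\<ge>1. x n \<in> {0..1}"
    and W: "\<forall>N::nat\<ge>1. Wp p (empirical x N) lambda1 \<le> C * (1 / real N)" by blast
  show False
  proof (rule no_good[OF x])
    fix N :: nat and \<delta> :: real assume N: "N \<ge> 1" and d: "\<delta> > 0"
    show "\<exists>\<pi>\<in>couplings (empirical x N) lambda1. (\<integral>z. \<bar>fst z - snd z\<bar> \<partial>\<pi>) \<le> C / real N + \<delta>"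
      by (rule Wp_small[OF p N x _ d]) (use W N in auto)
  qed
next
  assume "\<exists>(x::nat \<Rightarrow> real) (C::real). (\<forall>n\<ge>1. x n \<in> {0..1}) \<and>
                  (\<forall>N::nat\<ge>1. Winf (empirical x N) lambda1 \<le> ereal (C * (1 / real N)))"
  then obtain x :: "nat \<Rightarrow> real" and C :: real where x: "\<forall>n\<ge>1. x n \<in> {0..1}"
    and W: "\<forall>N::nat\<ge>1. Winf (empirical x N) lambda1 \<le> ereal (C * (1 / real N))" by blast
  show False
  proof (rule no_good[OF x])
    fix N :: nat and \<delta> :: real assume N: "N \<ge> 1" and d: "\<delta> > 0"
    show "\<exists>\<pi>\<in>couplings (empirical x N) lambda1. (\<integral>z. \<bar>fst z - snd z\<bar> \<partial>\<pi>) \<le> C / real N + \<delta>"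
      by (rule Winf_small[OF N x _ d]) (use W N in auto)
  qed
qed

end
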